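(* Let $n\ge2$ be an integer, $\alpha=1-\frac1n$, $\gamma_n=\frac12+\frac1n$, and let $\beta\le0$ be real with $Q\equiv\alpha-\beta-1\ge1$. For $y\le-1$ put $$F(t)=yt+Q\log\frac{t}{t+1},\quad G(u)=-u^2+2(-y)^{1/2}u+(2Q+\gamma_n)\log u,$$ $$t_0=\frac{-1+\sqrt{1+\frac{4Q}{-y}}}{2},\quad u_0=\frac{(-y)^{1/2}}{2}\Big(1+\sqrt{1+\tfrac{4Q}{-y}+\tfrac{2\gamma_n}{-y}}\Big)$$ (the unique positive critical points of $F$ and $G$). There is a constant $C_n>0$ depending only on $n$ such that for all such $\beta$ and all $y\le-1$: $$C_n^{-1}Q^{-\frac14-\frac1{2n}}\frac{(-y)^{-1}e^{y+F(t_0)}}{\Gamma(Q+1)}\le\mathcal{T}(\beta,\alpha,y)\le C_nQ^{\frac14}\frac{e^{y+F(t_0)}}{\Gamma(Q+1)},$$ $$C_n^{-1}Q^{-\frac14}\frac{(-y)^{\frac{1-2\alpha}{4}}e^{y+G(u_0)}}{\Gamma(Q+1)}\le\mathcal{M}(\beta,\alpha,y)\le C_n\frac{(-y)^{\frac{1-2\alpha}{4}}e^{y+G(u_0)}}{\Gamma(Q+1)}.$$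
   Context: $(x)_k=\prod_{m=1}^k(x+m-1)$, $(x)_0=1$. $\mathcal{M}(\beta,\alpha,y)=\sum_{k\ge0}\frac{(\beta)_k}{(\alpha)_k}\frac{y^k}{k!}$. For $y<0$, $\mathcal{T}(\beta,\alpha,y)=\frac{e^y}{\Gamma(\alpha-\beta)}\int_0^\infty e^{yt}t^{\alpha-\beta-1}(1+t)^{\beta-1}dt$. *)

theory Defs
  imports "HOL-Analysis.Analysis"
begin

definition kummerM :: "real \<Rightarrow> real \<Rightarrow> real \<Rightarrow> real" where
  "kummerM \<beta> \<alpha> y = (\<Sum>k. pochhammer \<beta> k / pochhammer \<alpha> k * y ^ k / fact k)"

text \<open>Tricomi-type function T(beta, alpha, y) for y < 0, via its integral representation.\<close>
definition tricomiT :: "real \<Rightarrow> real \<Rightarrow> real \<Rightarrow> real" where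
  "tricomiT \<beta> \<alpha> y = exp y / Gamma (\<alpha> - \<beta>) *
     (LBINT t:{0<..}. exp (y * t) * t powr (\<alpha> - \<beta> - 1) * (1 + t) powr (\<beta> - 1))"

definition Ffun :: "real \<Rightarrow> real \<Rightarrow> real \<Rightarrow> real" where
  "Ffun Q y t = y * t + Q * ln (t / (t + 1))"

definition Gfun :: "real \<Rightarrow> real \<Rightarrow> real \<Rightarrow> real \<Rightarrow> real" where
  "Gfun \<gamma> Q y u = - u\<^sup>2 + 2 * sqrt (- y) * u + (2 * Q + \<gamma>) * ln u"

definition t0 :: "real \<Rightarrow> real \<Rightarrow> real" where
  "t0 Q y = (-1 + sqrt (1 + 4 * Q / (- y))) / 2"

definition u0 :: "real \<Rightarrow> real \<Rightarrow> real \<Rightarrow> real" where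
  "u0 \<gamma> Q y = sqrt (- y) / 2 * (1 + sqrt (1 + 4 * Q / (- y) + 2 * \<gamma> / (- y)))"

end

theory Submission
  imports Defs "HOL-Computational_Algebra.Formal_Power_Series" "HOL-Real_Asymp.Real_Asymp"
begin


definition Wc :: "real \<Rightarrow> nat \<Rightarrow> real" where
  "Wc a k = fact (2*k) / (4^k * fact k * pochhammer a k)"

lemma Wc_Suc:
  assumes "a > 0"
  shows "Wc a (Suc k) = Wc a k * (2*k+1) / (2*k+2*a)"
proof -
  have p: "pochhammer a k > 0" using assms by (simp add: pochhammer_pos)
  have F: "fact (2 * Suc k) = (2*real k+2)*(2*real k+1)*(fact (2*k)::real)"
    by (simp add: fact_Suc algebra_simps)
  have D: "4^Suc k * fact (Suc k) * pochhammer a (Suc k) = (4*(real k+1)*(a+k)) * (4^k*fact k*pochhammer a k)"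
    by (simp add: pochhammer_rec' algebra_simps)
  have e1: "Wc a (Suc k) = ((2*real k+2)*(2*real k+1)*fact (2*k)) / ((4*(real k+1)*(a+k)) * (4^k*fact k*pochhammer a k))"
    unfolding Wc_def by (simp only: F D)
  have e2: "Wc a k * (2*real k+1) / (2*real k+2*a) = (fact (2*k) * (2*real k+1)) / ((4^k*fact k*pochhammer a k) * (2*real k+2*a))"
    unfolding Wc_def by (simp only: times_divide_eq_left divide_divide_eq_left)
  have n1: "(4*(real k+1)*(a+k)) * (4^k*fact k*pochhammer a k) \<noteq> 0"
    using p assms by (intro no_zero_divisors) auto
  have n2: "(4^k*fact k*pochhammer a k) * (2*real k+2*a) \<noteq> 0"
    using p assms by (intro no_zero_divisors) auto
  have e3: "((2*real k+2)*(2*real k+1)*fact (2*k)) / ((4*(real k+1)*(a+k)) * (4^k*fact k*pochhammer a k))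
     = (fact (2*k) * (2*real k+1)) / ((4^k*fact k*pochhammer a k) * (2*real k+2*a))"
    by (simp only: frac_eq_eq[OF n1 n2]) (simp only: algebra_simps)
  show ?thesis using e1 e2 e3 by simp
qed

lemma cancel_aux: "p \<noteq> 0 \<Longrightarrow> q \<noteq> 0 \<Longrightarrow> (W::real) * p / q * (Y * (q / p)) = W * Y"
  by (simp add: field_simps)

lemma young1:
  fixes a r :: real
  assumes "0 \<le> r" "r \<le> 1" "a \<ge> 0"
  shows "a powr r \<le> r * a + (1 - r)"
proof (cases "a = 0")
  case True then show ?thesis using assms by simp
next
  case False
  then show ?thesis using Youngs_inequality_0[of r "1-r" a 1] assms by auto
qed

lemma tangent1:
  fixes u r :: real
  assumes "0 \<le> r" "u > 0"
  shows "u powr r \<ge> 1 + r * (1 - 1/u)"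
proof -
  have "ln (1/u) \<le> 1/u - 1" using ln_le_minus_one[of "1/u"] assms by simp
  hence "ln u \<ge> 1 - 1/u" using assms by (simp add: ln_div)
  hence "1 + r * (1 - 1/u) \<le> 1 + r * ln u" using assms by (intro add_left_mono mult_left_mono) auto
  also have "\<dots> \<le> exp (r * ln u)" by (rule exp_ge_add_one_self)
  also have "\<dots> = u powr r" using assms by (simp add: powr_def)
  finally show ?thesis .
qed

lemma Wc_pos: "a > 0 \<Longrightarrow> Wc a k > 0"
  unfolding Wc_def by (simp add: pochhammer_pos)

lemma Wc_upper:
  assumes "0 \<le> r" "r \<le> 1/2"
  shows "Wc (1/2 + r) k * (2*k+1) powr r \<le> 1"
proof (induction k)
  case 0 then show ?case by (simp add: Wc_def)
next
  case (Suc k)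
  define a where "a = 1/2 + r"
  have a: "a > 0" using assms by (simp add: a_def)
  have b: "(1 + 2/(2*real k+1)) powr r \<le> r * (1 + 2/(2*real k+1)) + (1 - r)"
    using assms by (intro young1) auto
  have "2*real (Suc k)+1 = (2*real k+1) * (1 + 2/(2*real k+1))"
    by (simp add: field_simps)
  then have "(2*real (Suc k)+1) powr r = ((2*real k+1) * (1 + 2/(2*real k+1))) powr r"
    by simp
  also have "\<dots> = (2*real k+1) powr r * (1 + 2/(2*real k+1)) powr r"
    by (simp add: powr_mult)
  also have "\<dots> \<le> (2*real k+1) powr r * (r * (1 + 2/(2*real k+1)) + (1 - r))"
    using b by (intro mult_left_mono) auto
  also have "\<dots> = (2*real k+1) powr r * ((2*k+2*a) / (2*k+1))"
    by (simp add: a_def field_simps)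
  finally have c: "(2*real (Suc k)+1) powr r \<le> (2*real k+1) powr r * ((2*k+2*a) / (2*k+1))" .
  have "Wc a (Suc k) * (2*real (Suc k)+1) powr r = Wc a k * (2*k+1) / (2*k+2*a) * (2*real (Suc k)+1) powr r"
    using a by (simp add: Wc_Suc)
  also have "\<dots> \<le> Wc a k * (2*k+1) / (2*k+2*a) * ((2*real k+1) powr r * ((2*k+2*a) / (2*k+1)))"
    using c a Wc_pos[OF a, of k] by (intro mult_left_mono) auto
  also have "\<dots> = Wc a k * (2*real k+1) powr r"
    using a by (intro cancel_aux) auto
  also have "\<dots> \<le> 1" using Suc by (simp add: a_def)
  finally show ?case by (simp add: a_def)
qed

lemma Wc_lower_aux:
  assumes "0 \<le> r" "r \<le> 1/2" "k \<ge> 1"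
  shows "Wc (1/2 + r) k * (2*real k-1) powr r \<ge> 1/2"
  using assms(3)
proof (induction k rule: dec_induct)
  case base
  have w: "Wc (1/2 + r) 1 = 2 / (4 * (1/2 + r))" by (simp add: Wc_def)
  have "2 / (4 * (1/2 + r)) \<ge> 1/2" using assms by (simp add: field_simps)
  then show ?case using w by simp
next
  case (step k)
  define a where "a = 1/2 + r"
  have a: "a > 0" using assms by (simp add: a_def)
  have k1: "real k \<ge> 1" using step by simp
  have "(2*real k+1)/(2*real k-1) > 0" using k1 by auto
  then have b: "((2*real k+1)/(2*real k-1)) powr r \<ge> 1 + r * (1 - 1/((2*real k+1)/(2*real k-1)))"
    using assms by (intro tangent1) auto
  have e: "1 + r * (1 - 1/((2*real k+1)/(2*real k-1))) = (2*k+2*a)/(2*k+1)"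
    using k1 by (simp add: a_def field_simps)
  have "(2*real k+1) powr r = (2*real k-1) powr r * ((2*real k+1)/(2*real k-1)) powr r"
    using k1 by (subst powr_mult[symmetric]) auto
  also have "\<dots> \<ge> (2*real k-1) powr r * ((2*k+2*a)/(2*k+1))"
    using b e by (intro mult_left_mono) auto
  finally have c: "(2*real k+1) powr r \<ge> (2*real k-1) powr r * ((2*k+2*a)/(2*k+1))" .
  have "Wc a (Suc k) * (2*real (Suc k)-1) powr r = Wc a k * (2*k+1) / (2*k+2*a) * (2*real k+1) powr r"
    using a by (simp add: Wc_Suc algebra_simps)
  also have "\<dots> \<ge> Wc a k * (2*k+1) / (2*k+2*a) * ((2*real k-1) powr r * ((2*k+2*a)/(2*k+1)))"
    using c a Wc_pos[OF a, of k] by (intro mult_left_mono) auto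
  also have "Wc a k * (2*k+1) / (2*k+2*a) * ((2*real k-1) powr r * ((2*k+2*a)/(2*k+1)))
       = Wc a k * (2*real k-1) powr r"
    using a by (intro cancel_aux) auto
  finally show ?case using step by (simp add: a_def)
qed

lemma Wc_lower:
  assumes "0 \<le> r" "r \<le> 1/2"
  shows "Wc (1/2 + r) k * (2*k+1) powr r \<ge> 1/2"
proof (cases "k = 0")
  case True then show ?thesis by (simp add: Wc_def)
next
  case False
  have a: "Wc (1/2 + r) k > 0" using assms by (intro Wc_pos) auto
  have "(2*real k-1) powr r \<le> (2*real k+1) powr r"
    using False assms by (intro powr_mono2) auto
  then have "Wc (1/2 + r) k * (2*real k-1) powr r \<le> Wc (1/2 + r) k * (2*real k+1) powr r"
    using a by (intro mult_left_mono) auto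
  then show ?thesis using Wc_lower_aux[OF assms, of k] False by simp
qed



definition cf :: "real \<Rightarrow> nat \<Rightarrow> real" where
  "cf a k = 1 / (pochhammer a k * fact k)"

definition hyp0 :: "real \<Rightarrow> real \<Rightarrow> real" where
  "hyp0 a z = (\<Sum>k. cf a k * z ^ k)"

lemma cf_pos: "a > 0 \<Longrightarrow> cf a k > 0"
  unfolding cf_def by (simp add: pochhammer_pos)

lemma cf_term:
  assumes "a > 0"
  shows "cf a k * (x^2/4) ^ k = Wc a k * (x ^ (2*k) / fact (2*k))"
proof -
  have p: "pochhammer a k > 0" using assms by (simp add: pochhammer_pos)
  have "(x^2/4) ^ k = x^(2*k) / 4^k" by (simp add: power_divide power_mult)
  then show ?thesis using p unfolding cf_def Wc_def by (simp add: field_simps)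
qed

lemma exp_pairs: "(\<lambda>k. x^(2*k)/fact (2*k) + x^(2*k+1)/fact (2*k+1)) sums exp (x::real)"
proof -
  have "(\<lambda>n. sum (\<lambda>n. x ^ n /\<^sub>R fact n) {n * 2 ..< n * 2 + 2}) sums exp x"
    by (rule sums_group[OF exp_converges]) auto
  moreover have "{n * 2 ..< n * 2 + 2} = {2*n, 2*n+1}" for n :: nat by auto
  ultimately show ?thesis by (simp add: divide_inverse mult.commute)
qed

lemma cosh_evens: "(\<lambda>k. x^(2*k)/fact (2*k)) sums cosh (x::real)"
proof -
  have "(\<lambda>n. sum (\<lambda>n. if even n then x ^ n /\<^sub>R fact n else 0) {n * 2 ..< n * 2 + 2}) sums cosh x"
    by (rule sums_group[OF cosh_converges]) auto
  moreover have "{n * 2 ..< n * 2 + 2} = {2*n, 2*n+1}" for n :: nat by auto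
  ultimately show ?thesis by (simp add: divide_inverse mult.commute)
qed

lemma sinh_odds: "(\<lambda>k. x^(2*k+1)/fact (2*k+1)) sums sinh (x::real)"
proof -
  have "(\<lambda>n. sum (\<lambda>n. if even n then 0 else x ^ n /\<^sub>R fact n) {n * 2 ..< n * 2 + 2}) sums sinh x"
    by (rule sums_group[OF sinh_converges]) auto
  moreover have "{n * 2 ..< n * 2 + 2} = {2*n, 2*n+1}" for n :: nat by auto
  ultimately show ?thesis by (simp add: divide_inverse mult.commute)
qed

lemma weighted_evens: "(\<lambda>k. (2*real k+1) * (x^(2*k)/fact (2*k))) sums (cosh x + x * sinh (x::real))"
proof -
  define g where "g k = 2*real k * (x^(2*k)/fact (2*k))" for k
  have "g (Suc k) = x * (x^(2*k+1)/fact (2*k+1))" for k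
  proof -
    have e: "2*Suc k = Suc (2*k+1)" by simp
    have F: "(fact (2*Suc k)::real) = (2+2*real k) * fact (2*k+1)"
      by (simp only: e fact_Suc) simp
    have P: "x^(2*Suc k) = x * x^(2*k+1)" by (simp only: e power_Suc)
    have n: "2+2*real k \<noteq> 0" by simp
    have "g (Suc k) = (2+2*real k) * (x * x^(2*k+1)) / ((2+2*real k) * fact (2*k+1))"
      unfolding g_def F P of_nat_Suc times_divide_eq_right by (simp only: distrib_left mult_1_right)
    also have "\<dots> = x * (x^(2*k+1)/fact (2*k+1))"
      using n by (simp only: mult_divide_mult_cancel_left_if if_False) simp
    finally show ?thesis .
  qed
  then have "(\<lambda>k. g (Suc k)) sums (x * sinh x)"
    using sums_mult[OF sinh_odds, of x] by simp
  then have "g sums (x * sinh x)" by (subst (asm) sums_Suc_iff) (simp add: g_def)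
  from sums_add[OF cosh_evens[of x] this]
  have "(\<lambda>k. x^(2*k)/fact (2*k) + g k) sums (cosh x + x * sinh x)" .
  moreover have "(\<lambda>k. x^(2*k)/fact (2*k) + g k) = (\<lambda>k. (2*real k+1) * (x^(2*k)/fact (2*k)))"
    by (rule ext) (simp add: g_def algebra_simps add_divide_distrib)
  ultimately show ?thesis by simp
qed

lemma inv_powr_split:
  fixes x q r :: real
  assumes "x > 0" "q > 0"
  shows "1 / q powr r = x powr (-r) * ((x/q) powr r)"
proof -
  have e: "x powr (-r) * x powr r = 1" using assms(1) by (simp add: powr_minus)
  have "x powr (-r) * ((x/q) powr r) = x powr (-r) * (x powr r / q powr r)"
    by (simp only: powr_divide)
  also have "\<dots> = 1 / q powr r" by (simp only: times_divide_eq_right e)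
  finally show ?thesis by simp
qed

lemma term_upper:
  assumes "x > 0" "0 \<le> r" "r \<le> 1/2"
  shows "cf (1/2+r) k * (x^2/4) ^ k \<le> x powr (-r) * (x^(2*k)/fact (2*k) + x^(2*k+1)/fact (2*k+1))"
proof -
  define q where "q = 2*real k+1"
  define t where "t = x^(2*k)/fact (2*k)"
  have q: "q > 0" by (simp add: q_def)
  have t: "t \<ge> 0" using assms by (simp add: t_def)
  have qr: "q powr r > 0" using q by simp
  have "Wc (1/2+r) k * q powr r \<le> 1" using Wc_upper[OF assms(2,3), of k] by (simp add: q_def)
  then have "Wc (1/2+r) k \<le> 1 / q powr r" using qr by (simp add: pos_le_divide_eq)
  then have W: "Wc (1/2+r) k \<le> q powr (-r)" by (simp add: powr_minus_divide)
  have xq: "x/q \<ge> 0" using assms q by simp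
  have y0: "(x/q) powr r \<le> r * (x/q) + (1 - r)"
    using young1[of r "x/q"] assms xq by simp
  have "r * (x/q) \<le> x/q" using assms xq by (intro mult_left_le_one_le) auto
  with y0 assms(2) have y: "(x/q) powr r \<le> 1 + x/q" by linarith
  have "q powr (-r) = 1 / q powr r" by (simp add: powr_minus_divide)
  also have "\<dots> = x powr (-r) * ((x/q) powr r)" by (rule inv_powr_split[OF assms(1) q])
  also have "\<dots> \<le> x powr (-r) * (1 + x/q)"
    using y by (intro mult_left_mono) auto
  finally have z: "q powr (-r) \<le> x powr (-r) * (1 + x/q)" .
  have tt: "t * (x/q) = x^(2*k+1)/fact (2*k+1)"
  proof -
    have F: "(fact (2*k+1)::real) = q * fact (2*k)" by (simp add: q_def)
    have "t * (x/q) = (x * x^(2*k)) / (q * fact (2*k))" unfolding t_def by (simp add: mult.commute)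
    also have "\<dots> = x^(2*k+1)/fact (2*k+1)" by (simp only: F) simp
    finally show ?thesis .
  qed
  have "cf (1/2+r) k * (x^2/4) ^ k = Wc (1/2+r) k * t"
    using assms by (simp add: cf_term t_def)
  also have "\<dots> \<le> q powr (-r) * t" using W t by (intro mult_right_mono) auto
  also have "\<dots> \<le> x powr (-r) * (1 + x/q) * t" using z t by (intro mult_right_mono) auto
  also have "\<dots> = x powr (-r) * (t + t * (x/q))" by (simp add: algebra_simps)
  finally show ?thesis using tt by (simp add: t_def)
qed

lemma hyp0_upper:
  assumes "x > 0" "0 \<le> r" "r \<le> 1/2"
  shows "summable (\<lambda>k. cf (1/2+r) k * (x^2/4) ^ k)"
    and "hyp0 (1/2+r) (x^2/4) \<le> x powr (-r) * exp x"
proof -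
  have s: "(\<lambda>k. x powr (-r) * (x^(2*k)/fact (2*k) + x^(2*k+1)/fact (2*k+1))) sums (x powr (-r) * exp x)"
    by (rule sums_mult[OF exp_pairs])
  have nn: "0 \<le> cf (1/2+r) k * (x^2/4) ^ k" for k
    using cf_pos[of "1/2+r" k] assms by auto
  show sm: "summable (\<lambda>k. cf (1/2+r) k * (x^2/4) ^ k)"
    by (rule summable_comparison_test'[OF sums_summable[OF s], of 0]) (use nn term_upper[OF assms] in auto)
  show "hyp0 (1/2+r) (x^2/4) \<le> x powr (-r) * exp x"
    unfolding hyp0_def using sums_le[OF _ summable_sums[OF sm] s] term_upper[OF assms] by blast
qed

lemma term_lower:
  assumes "x > 0" "0 \<le> r" "r \<le> 1/2"
  shows "cf (1/2+r) k * (x^2/4) ^ k \<ge>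
     (1/2) * (1+x) powr (-r) * ((1+r) * (x^(2*k)/fact (2*k)) - r/(1+x) * ((2*real k+1) * (x^(2*k)/fact (2*k))))"
proof -
  define q where "q = 2*real k+1"
  define t where "t = x^(2*k)/fact (2*k)"
  define y where "y = 1 + x"
  have q: "q > 0" by (simp add: q_def)
  have yp: "y > 0" using assms by (simp add: y_def)
  have t: "t \<ge> 0" using assms by (simp add: t_def)
  have qr: "q powr r > 0" using q by simp
  have "Wc (1/2+r) k * q powr r \<ge> 1/2" using Wc_lower[OF assms(2,3), of k] by (simp add: q_def)
  then have "Wc (1/2+r) k \<ge> (1/2) / q powr r" using qr by (simp add: pos_divide_le_eq)
  then have W: "Wc (1/2+r) k \<ge> (1/2) * q powr (-r)" by (simp add: powr_minus_divide)
  have tg: "(y/q) powr r \<ge> 1 + r * (1 - 1/(y/q))"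
    using tangent1[of r "y/q"] assms q yp by simp
  have e: "1 + r * (1 - 1/(y/q)) = (1+r) - r/y * q" using q yp by (simp add: field_simps)
  have "q powr (-r) = 1 / q powr r" by (simp add: powr_minus_divide)
  also have "\<dots> = y powr (-r) * ((y/q) powr r)" using yp q by (rule inv_powr_split)
  also have "\<dots> \<ge> y powr (-r) * ((1+r) - r/y * q)"
    using tg e by (intro mult_left_mono) auto
  finally have z: "q powr (-r) \<ge> y powr (-r) * ((1+r) - r/y * q)" .
  have "(1/2) * y powr (-r) * ((1+r) * t - r/y * (q * t)) = (1/2) * (y powr (-r) * ((1+r) - r/y * q)) * t"
    by (simp add: algebra_simps)
  also have "\<dots> \<le> (1/2) * q powr (-r) * t" using z t by (intro mult_right_mono) auto
  also have "\<dots> \<le> Wc (1/2+r) k * t" using W t by (intro mult_right_mono) auto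
  also have "\<dots> = cf (1/2+r) k * (x^2/4) ^ k"
    using assms by (simp add: cf_term t_def)
  finally show ?thesis by (simp add: y_def q_def t_def)
qed

lemma hyp0_lower:
  assumes "x > 0" "0 \<le> r" "r \<le> 1/2"
  shows "hyp0 (1/2+r) (x^2/4) \<ge> (1/4) * (1+x) powr (-r) * exp x"
proof -
  define C where "C = cosh x" define S where "S = sinh x"
  have s: "(\<lambda>k. (1/2) * (1+x) powr (-r) * ((1+r) * (x^(2*k)/fact (2*k)) - r/(1+x) * ((2*real k+1) * (x^(2*k)/fact (2*k)))))
      sums ((1/2) * (1+x) powr (-r) * ((1+r) * C - r/(1+x) * (C + x * S)))"
    unfolding C_def S_def
    by (intro sums_mult sums_diff sums_mult cosh_evens weighted_evens)
  have sm: "summable (\<lambda>k. cf (1/2+r) k * (x^2/4) ^ k)" by (rule hyp0_upper[OF assms])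
  have le1: "(1/2) * (1+x) powr (-r) * ((1+r) * C - r/(1+x) * (C + x * S)) \<le> hyp0 (1/2+r) (x^2/4)"
    unfolding hyp0_def using sums_le[OF _ s summable_sums[OF sm]] term_lower[OF assms] by blast
  have SC: "S \<le> C" unfolding S_def C_def by (rule sinh_le_cosh_real)
  have "r/(1+x) * (C + x * S) \<le> r/(1+x) * ((1+x) * C)"
    using SC assms by (intro mult_left_mono) (auto simp: algebra_simps)
  also have "\<dots> = r * C" using assms by simp
  finally have "(1+r) * C - r/(1+x) * (C + x * S) \<ge> C" by (simp add: algebra_simps)
  moreover have "C \<ge> exp x / 2" unfolding C_def cosh_def by simp
  ultimately have K: "(1+r) * C - r/(1+x) * (C + x * S) \<ge> exp x / 2" by linarith
  have "(1/4) * (1+x) powr (-r) * exp x = (1/2) * (1+x) powr (-r) * (exp x / 2)" by simp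
  also have "\<dots> \<le> (1/2) * (1+x) powr (-r) * ((1+r) * C - r/(1+x) * (C + x * S))"
    using K by (intro mult_left_mono) auto
  also have "\<dots> \<le> hyp0 (1/2+r) (x^2/4)" by (rule le1)
  finally show ?thesis .
qed



lemma poch_neg_nat:
  assumes "j \<le> k"
  shows "pochhammer (- real k) j = (-1)^j * fact k / fact (k-j)"
proof -
  have g: "real k gchoose j = (-1)^j * pochhammer (- real k) j / fact j"
    by (rule gbinomial_pochhammer)
  have b: "real k gchoose j = fact k / (fact j * fact (k-j))"
    using binomial_fact[OF assms, where 'a=real] binomial_gbinomial[of k j, where 'a=real] by metis
  have m1: "(-1::real)^j * (-1)^j = 1" by (simp add: power_mult_distrib[symmetric])
  have "(-1)^j * (real k gchoose j) * fact j = ((-1)^j * (-1)^j) * pochhammer (- real k) j"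
    using g by simp
  then have "pochhammer (- real k) j = (-1)^j * (real k gchoose j) * fact j"
    unfolding m1 by simp
  also have "\<dots> = (-1)^j * fact k / fact (k-j)"
    using b by (simp add: field_simps)
  finally show ?thesis .
qed

lemma kummer_coeff:
  assumes "a > 0"
  shows "(\<Sum>i\<le>k. (y^i / fact i) * (pochhammer B (k-i) * cf a (k-i) * (-y)^(k-i)))
       = pochhammer (a - B) k / pochhammer a k * y^k / fact k"
proof -
  have "(\<Sum>i\<le>k. (y^i / fact i) * (pochhammer B (k-i) * cf a (k-i) * (-y)^(k-i)))
      = (\<Sum>j\<in>{0..k}. (y^(k-j) / fact (k-j)) * (pochhammer B j * cf a j * (-y)^j))"
    by (subst sum.atLeastAtMost_rev) (simp add: atMost_atLeast0)
  also have "\<dots> = (\<Sum>j\<in>{0..k}. y^k / fact k * ((pochhammer B j * pochhammer (- real k) j) / (fact j * pochhammer a j)))"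
  proof (rule sum.cong[OF refl])
    fix j assume j: "j \<in> {0..k}"
    then have jk: "j \<le> k" by simp
    have pw: "y^(k-j) * (-y)^j = (-1)^j * y^k"
      using jk by (simp add: power_minus' power_add[symmetric] mult.commute)
    have "(y^(k-j) / fact (k-j)) * (pochhammer B j * cf a j * (-y)^j)
        = (y^(k-j) * (-y)^j) * pochhammer B j / (fact (k-j) * fact j * pochhammer a j)"
      unfolding cf_def by (simp add: field_simps)
    also have "\<dots> = y^k / fact k * ((pochhammer B j * ((-1)^j * fact k / fact (k-j))) / (fact j * pochhammer a j))"
      unfolding pw by (simp add: field_simps)
    finally show "(y^(k-j) / fact (k-j)) * (pochhammer B j * cf a j * (-y)^j)
        = y^k / fact k * ((pochhammer B j * pochhammer (- real k) j) / (fact j * pochhammer a j))"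
      by (simp add: poch_neg_nat[OF jk])
  qed
  also have "\<dots> = y^k / fact k * (\<Sum>j\<in>{0..k}. (pochhammer B j * pochhammer (- real k) j) / (fact j * pochhammer a j))"
    by (simp add: sum_distrib_left)
  also have "(\<Sum>j\<in>{0..k}. (pochhammer B j * pochhammer (- real k) j) / (fact j * pochhammer a j))
      = pochhammer (a - B) k / pochhammer a k"
  proof -
    have c: "\<forall>i \<in> {0..< k}. a \<noteq> - of_nat i" using assms by auto
    show ?thesis using Vandermonde_pochhammer[OF c, of B] by simp
  qed
  finally show ?thesis by (simp add: ac_simps)
qed

lemma kummer_transform:
  assumes "a > 0" "s \<ge> 0"
    and sm: "summable (\<lambda>k. pochhammer B k * cf a k * s^k)"
    and nn: "\<And>k. pochhammer B k * cf a k * s^k \<ge> 0"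
  shows "kummerM (a - B) a (-s) = exp (-s) * (\<Sum>k. pochhammer B k * cf a k * s^k)"
proof -
  define A where "A i = (-s)^i / fact i" for i
  define Bt where "Bt k = pochhammer B k * cf a k * s^k" for k
  have sa: "summable (\<lambda>k. norm (A k))"
  proof -
    have "(\<lambda>k. norm (A k)) = (\<lambda>k. inverse (fact k) * s^k)"
      using assms(2) by (auto simp: A_def abs_mult power_abs divide_inverse mult.commute)
    then show ?thesis using summable_exp[of s] by simp
  qed
  have sb: "summable (\<lambda>k. norm (Bt k))"
    using sm nn unfolding Bt_def by simp
  have eA: "(\<Sum>k. A k) = exp (-s)"
    using exp_converges[of "-s"] unfolding A_def by (simp add: sums_iff divide_inverse mult.commute)
  have cp: "(\<lambda>k. \<Sum>i\<le>k. A i * Bt (k - i)) sums ((\<Sum>k. A k) * (\<Sum>k. Bt k))"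
    by (rule Cauchy_product_sums[OF sa sb])
  have "(\<lambda>k. \<Sum>i\<le>k. A i * Bt (k - i)) = (\<lambda>k. pochhammer (a - B) k / pochhammer a k * (-s)^k / fact k)"
  proof (rule ext)
    fix k
    show "(\<Sum>i\<le>k. A i * Bt (k - i)) = pochhammer (a - B) k / pochhammer a k * (-s)^k / fact k"
      using kummer_coeff[OF assms(1), of "-s" B k] unfolding A_def Bt_def by simp
  qed
  with cp have "(\<lambda>k. pochhammer (a - B) k / pochhammer a k * (-s)^k / fact k) sums (exp (-s) * (\<Sum>k. Bt k))"
    using eA by simp
  then show ?thesis unfolding kummerM_def Bt_def by (simp add: sums_iff)
qed



lemma powr_mult_pow:
  fixes x :: real
  assumes "x \<ge> 0" "Qv > -1"
  shows "x powr Qv * (s*x)^k = s^k * x powr (Qv + real k)"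
proof (cases "x = 0")
  case True then show ?thesis using assms by (cases k) auto
next
  case False
  then have "x > 0" using assms by simp
  then show ?thesis by (simp add: powr_add powr_realpow power_mult_distrib)
qed

lemma hyp0_summable:
  assumes "0 \<le> r" "r \<le> 1/2" "z > 0"
  shows "summable (\<lambda>k. cf (1/2+r) k * z ^ k)"
proof -
  define X where "X = 2 * sqrt z"
  have X: "X > 0" "X^2/4 = z" using assms by (auto simp: X_def power_mult_distrib)
  show ?thesis using hyp0_upper(1)[OF X(1) assms(1,2)] X(2) by simp
qed

lemma reassoc_aux: "(A::real) / E * (c * B) = c * (A * B) / E"
  by (simp add: divide_inverse mult_ac)
lemma reassoc_aux2: "(c::real) * (S * P) / E = 1 * P / E * (c * S)"
  by (simp add: divide_inverse mult_ac)

lemma int_identity: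
  assumes "0 \<le> r" "r \<le> 1/2" "s > 0" "Qv > -1"
  shows "(\<integral>\<^sup>+ x. ennreal (indicator {0..} x * x powr Qv / exp x * hyp0 (1/2+r) (s*x)) \<partial>lborel)
      = (\<Sum>k. ennreal (pochhammer (Qv+1) k * cf (1/2+r) k * s^k * Gamma (Qv+1)))"
proof -
  define a where "a = 1/2 + r"
  have a: "a > 0" using assms by (simp add: a_def)
  define g where "g k x = indicator {0..} x * x powr (Qv + real k) / exp x * (cf a k * s^k)" for k x
  have gnn: "g k x \<ge> 0" for k x
    unfolding g_def using cf_pos[OF a, of k] assms by (auto simp: indicator_def)
  have pt: "ennreal (indicator {0..} x * x powr Qv / exp x * hyp0 a (s*x)) = (\<Sum>k. ennreal (g k x))" for x
  proof (cases "x > 0")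
    case True
    have sm: "summable (\<lambda>k. cf a k * (s*x) ^ k)"
      unfolding a_def using hyp0_summable[OF assms(1,2)] True assms by simp
    have "indicator {0..} x * x powr Qv / exp x * hyp0 a (s*x) = (\<Sum>k. x powr Qv / exp x * (cf a k * (s*x) ^ k))"
    proof -
      have m: "(\<Sum>k. x powr Qv / exp x * (cf a k * (s*x) ^ k)) = x powr Qv / exp x * hyp0 a (s*x)"
        unfolding hyp0_def by (rule suminf_mult[OF sm])
      show ?thesis using True by (simp only: m) simp
    qed
    also have "\<dots> = (\<Sum>k. g k x)"
    proof (rule suminf_cong)
      fix k
      have "x powr Qv * (s*x)^k = s^k * x powr (Qv + real k)"
        using True assms by (intro powr_mult_pow) auto
      then show "x powr Qv / exp x * (cf a k * (s*x) ^ k) = g k x"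
      proof -
        have i1: "indicator {0..} x = (1::real)" using True by simp
        have "x powr Qv / exp x * (cf a k * (s*x) ^ k) = cf a k * (x powr Qv * (s*x)^k) / exp x"
          by (rule reassoc_aux)
        also have "\<dots> = cf a k * (s^k * x powr (Qv + real k)) / exp x" unfolding \<open>x powr Qv * (s*x)^k = s^k * x powr (Qv + real k)\<close> ..
        also have "\<dots> = 1 * x powr (Qv + real k) / exp x * (cf a k * s^k)" by (rule reassoc_aux2)
        finally show ?thesis unfolding g_def i1 .
      qed
    qed
    finally have e: "indicator {0..} x * x powr Qv / exp x * hyp0 a (s*x) = (\<Sum>k. g k x)" .
    have smg: "summable (\<lambda>k. g k x)"
    proof -
      have "(\<lambda>k. g k x) = (\<lambda>k. x powr Qv / exp x * (cf a k * (s*x) ^ k))"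
      proof (rule ext)
        fix k
        have "x powr Qv * (s*x)^k = s^k * x powr (Qv + real k)"
          using True assms by (intro powr_mult_pow) auto
        then show "g k x = x powr Qv / exp x * (cf a k * (s*x) ^ k)"
        proof -
        have i1: "indicator {0..} x = (1::real)" using True by simp
        have "x powr Qv / exp x * (cf a k * (s*x) ^ k) = cf a k * (x powr Qv * (s*x)^k) / exp x"
          by (rule reassoc_aux)
        also have "\<dots> = cf a k * (s^k * x powr (Qv + real k)) / exp x" unfolding \<open>x powr Qv * (s*x)^k = s^k * x powr (Qv + real k)\<close> ..
        also have "\<dots> = 1 * x powr (Qv + real k) / exp x * (cf a k * s^k)" by (rule reassoc_aux2)
        finally show ?thesis unfolding g_def i1 by (rule sym)
      qed
      qed
      then show ?thesis using summable_mult[OF sm] by simp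
    qed
    show ?thesis unfolding e using suminf_ennreal2[OF gnn smg] by simp
  next
    case False
    then have "g k x = 0" for k
      unfolding g_def using assms by (cases "x = 0") (auto simp: indicator_def)
    moreover have "indicator {0..} x * x powr Qv / exp x * hyp0 a (s*x) = 0"
      using False by (cases "x = 0") (auto simp: indicator_def)
    ultimately have "indicator {0..} x * x powr Qv / exp x * hyp0 a (s*x) = 0" "(\<lambda>k. ennreal (g k x)) = (\<lambda>k. 0)"
      by auto
    then show ?thesis by (simp only:) simp
  qed
  have meas: "(\<lambda>x. ennreal (g k x)) \<in> borel_measurable lborel" for k
    unfolding g_def by measurable
  have "(\<integral>\<^sup>+ x. ennreal (indicator {0..} x * x powr Qv / exp x * hyp0 a (s*x)) \<partial>lborel)
      = (\<integral>\<^sup>+ x. (\<Sum>k. ennreal (g k x)) \<partial>lborel)"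
    using pt by simp
  also have "\<dots> = (\<Sum>k. \<integral>\<^sup>+ x. ennreal (g k x) \<partial>lborel)"
    by (rule nn_integral_suminf[OF meas])
  also have "\<dots> = (\<Sum>k. ennreal (pochhammer (Qv+1) k * cf a k * s^k * Gamma (Qv+1)))"
  proof (rule suminf_cong)
    fix k
    have c: "cf a k * s^k \<ge> 0" using cf_pos[OF a, of k] assms by simp
    have gm: "Gamma (Qv + 1 + real k) = pochhammer (Qv+1) k * Gamma (Qv+1)"
    proof -
      have "Qv + 1 \<notin> \<int>\<^sub>\<le>\<^sub>0" using assms by (auto elim!: nonpos_Ints_cases)
      then have "pochhammer (Qv+1) k = Gamma (Qv + 1 + real k) / Gamma (Qv+1)"
        by (rule pochhammer_Gamma)
      moreover have "Gamma (Qv+1) \<noteq> 0" using assms by (simp add: Gamma_eq_zero_iff) (auto elim!: nonpos_Ints_cases)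
      ultimately show ?thesis by simp
    qed
    have "(\<integral>\<^sup>+ x. ennreal (g k x) \<partial>lborel)
        = (\<integral>\<^sup>+ x. ennreal (cf a k * s^k) * ennreal (indicator {0..} x * x powr (Qv + 1 + real k - 1) / exp x) \<partial>lborel)"
    proof (rule nn_integral_cong)
      fix x :: real
      have e: "g k x = (cf a k * s^k) * (indicator {0..} x * x powr (Qv + 1 + real k - 1) / exp x)"
        unfolding g_def by simp
      have v: "indicator {0..} x * x powr (Qv + 1 + real k - 1) / exp x \<ge> 0"
        by (simp add: indicator_def)
      show "ennreal (g k x) = ennreal (cf a k * s^k) * ennreal (indicator {0..} x * x powr (Qv + 1 + real k - 1) / exp x)"
        unfolding e by (rule ennreal_mult[OF c v])
    qed
    also have "\<dots> = ennreal (cf a k * s^k) * (\<integral>\<^sup>+ x. ennreal (indicator {0..} x * x powr (Qv + 1 + real k - 1) / exp x) \<partial>lborel)"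
      by (rule nn_integral_cmult) measurable
    also have "\<dots> = ennreal (cf a k * s^k) * ennreal (Gamma (Qv + 1 + real k))"
      using Gamma_conv_nn_integral_real[of "Qv + 1 + real k"] assms by simp
    also have "\<dots> = ennreal (cf a k * s^k * Gamma (Qv + 1 + real k))"
      using assms by (intro ennreal_mult''[symmetric] less_imp_le[OF Gamma_real_pos]) auto
    also have "\<dots> = ennreal (pochhammer (Qv+1) k * cf a k * s^k * Gamma (Qv+1))"
      unfolding gm by (simp add: mult_ac)
    finally show "(\<integral>\<^sup>+ x. ennreal (g k x) \<partial>lborel) = ennreal (pochhammer (Qv+1) k * cf a k * s^k * Gamma (Qv+1))" .
  qed
  finally show ?thesis by (simp add: a_def)
qed



lemma ln_lower2:
  fixes c :: real
  assumes "c \<ge> 0"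
  shows "ln (1 + c) \<ge> c - c^2"
proof -
  have "ln (1/(1+c)) \<le> 1/(1+c) - 1" using assms by (intro ln_le_minus_one) auto
  then have "ln (1+c) \<ge> 1 - 1/(1+c)" using assms by (simp add: ln_div)
  moreover have "1 - 1/(1+c) \<ge> c - c^2"
  proof -
    have "1 - 1/(1+c) = c/(1+c)" using assms by (simp add: field_simps)
    moreover have "c/(1+c) = c - c^2 + c^3/(1+c)" using assms
      by (simp add: field_simps power2_eq_square power3_eq_cube)
    moreover have "c^3/(1+c) \<ge> 0" using assms by simp
    ultimately show ?thesis by simp
  qed
  ultimately show ?thesis by linarith
qed

definition Gf :: "real \<Rightarrow> real \<Rightarrow> real \<Rightarrow> real" where
  "Gf s c u = -(u^2) + 2 * sqrt s * u + c * ln u"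

lemma u0_crit:
  assumes "s > 0" "Q > 0" "g > 0"
  shows "u0 g Q (-s) > 0" "2 * (u0 g Q (-s))^2 - 2 * sqrt s * u0 g Q (-s) = 2*Q + g"
proof -
  define R where "R = sqrt (1 + 4 * Q / s + 2 * g / s)"
  have q1: "4 * Q / s \<ge> 0" "2 * g / s \<ge> 0" using assms by auto
  have q0: "0 \<le> 1 + 4 * Q / s + 2 * g / s" using assms by (intro add_nonneg_nonneg) auto
  have R2: "R^2 = 1 + 4 * Q / s + 2 * g / s" unfolding R_def
  proof -
    show "(sqrt (1 + 4 * Q / s + 2 * g / s))^2 = 1 + 4 * Q / s + 2 * g / s" by (rule real_sqrt_pow2[OF q0])
  qed
  have R0: "R \<ge> 0" unfolding R_def by (rule real_sqrt_ge_zero[OF q0])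
  have U: "u0 g Q (-s) = sqrt s / 2 * (1 + R)" unfolding u0_def R_def by simp
  show "u0 g Q (-s) > 0" unfolding U using assms R0 by simp
  have s2: "(sqrt s)^2 = s" using assms by simp
  have gen: "\<And>t::real. 2 * (t / 2 * (1 + R))^2 - 2 * t * (t / 2 * (1 + R)) = t^2 * (R^2 - 1) / 2"
    by (simp add: power2_eq_square field_simps)
  have "2 * (sqrt s / 2 * (1 + R))^2 - 2 * sqrt s * (sqrt s / 2 * (1 + R)) = (sqrt s)^2 * (R^2 - 1) / 2"
    by (rule gen)
  also have "\<dots> = 2*Q + g" unfolding s2 R2 using assms by (simp add: field_simps)
  finally show "2 * (u0 g Q (-s))^2 - 2 * sqrt s * u0 g Q (-s) = 2*Q + g" unfolding U .
qed

lemma Gf_upper: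
  assumes "U > 0" "u > 0" "2 * U^2 - 2 * sqrt s * U = c" "c \<ge> 0"
  shows "Gf s c u \<le> Gf s c U - (u - U)^2"
proof -
  have l: "ln u - ln U \<le> u/U - 1"
    using ln_le_minus_one[of "u/U"] assms by (simp add: ln_div)
  have cU: "c / U = 2*U - 2 * sqrt s" using assms by (auto simp: field_simps power2_eq_square)
  have "c * (ln u - ln U) \<le> c * (u/U - 1)" using l assms by (intro mult_left_mono) auto
  also have "c * (u/U - 1) = (c/U) * (u - U)" using assms by (simp add: field_simps)
  also have "\<dots> = (2*U - 2 * sqrt s) * (u - U)" by (simp only: cU)
  finally have k: "c * (ln u - ln U) \<le> (2*U - 2 * sqrt s) * (u - U)" .
  have "Gf s c u - Gf s c U = (U^2 - u^2) + 2 * sqrt s * (u - U) + c * (ln u - ln U)"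
    unfolding Gf_def by (simp add: algebra_simps)
  moreover have "(U^2 - u^2) + 2 * sqrt s * (u - U) + (2*U - 2 * sqrt s) * (u - U) = 0 - (u-U)^2"
    by (simp add: power2_eq_square algebra_simps)
  ultimately show ?thesis using k by linarith
qed

lemma Gf_lower:
  assumes "U > 0" "U \<le> u" "u \<le> U + 1" "2 * U^2 - 2 * sqrt s * U = c" "c \<ge> 0" "s \<ge> 0"
  shows "Gf s c u \<ge> Gf s c U - 3"
proof -
  define h where "h = u - U"
  have h: "0 \<le> h" "h \<le> 1" using assms by (auto simp: h_def)
  have u: "u = U * (1 + h/U)" using assms by (simp add: h_def field_simps)
  have l: "ln u - ln U \<ge> h/U - (h/U)^2"
  proof -
    have p: "1 + h/U > 0" using assms h by (auto intro!: add_pos_nonneg)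
    have "ln u = ln U + ln (1 + h/U)" unfolding u using assms(1) p by (simp add: ln_mult)
    moreover have "ln (1 + h/U) \<ge> h/U - (h/U)^2" using h assms by (intro ln_lower2) auto
    ultimately show ?thesis by simp
  qed
  have cU: "c / U = 2*U - 2 * sqrt s" using assms by (auto simp: field_simps power2_eq_square)
  have cU2: "c / U^2 \<le> 2"
  proof -
    have "c / U^2 = (c/U)/U" by (simp add: power2_eq_square)
    also have "\<dots> = 2 - 2 * sqrt s / U" unfolding cU using assms by (simp add: field_simps)
    also have "\<dots> \<le> 2" using assms by simp
    finally show ?thesis .
  qed
  have "c * (ln u - ln U) \<ge> c * (h/U - (h/U)^2)" using l assms by (intro mult_left_mono) auto
  also have "c * (h/U - (h/U)^2) = (c/U) * h - (c/U^2) * h^2" using assms by (simp add: field_simps power2_eq_square)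
  finally have k: "c * (ln u - ln U) \<ge> (2*U - 2 * sqrt s) * h - (c/U^2) * h^2" unfolding cU .
  have k2: "(c/U^2) * h^2 \<le> 2 * h^2" using cU2 by (intro mult_right_mono) auto
  have h2: "h^2 \<le> 1" using h by (simp add: power_le_one)
  have "Gf s c u - Gf s c U = 0 - (2*U*h + h^2) + 2 * sqrt s * h + c * (ln u - ln U)"
    unfolding Gf_def h_def by (simp add: algebra_simps power2_eq_square)
  moreover have "0 - (2*U*h + h^2) + 2 * sqrt s * h + (2*U - 2 * sqrt s) * h = 0 - h^2"
    by (simp add: algebra_simps)
  ultimately show ?thesis using k k2 h2 by linarith
qed



lemma FTC_0_infty:
  fixes F f :: "real \<Rightarrow> real"
  assumes F: "\<And>x. x > 0 \<Longrightarrow> DERIV F x :> f x"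
    and c: "\<And>x. x > 0 \<Longrightarrow> isCont f x"
    and nn: "\<And>x. x > 0 \<Longrightarrow> 0 \<le> f x"
    and A: "(F \<longlongrightarrow> A) (at_right 0)"
    and B: "(F \<longlongrightarrow> B) at_top"
  shows "set_integrable lborel {0<..} f" "(LBINT x:{0<..}. f x) = B - A"
proof -
  have lt: "(0::ereal) < \<infinity>" by simp
  have F': "\<And>x. 0 < ereal x \<Longrightarrow> ereal x < \<infinity> \<Longrightarrow> DERIV F x :> f x" using F by (simp add: zero_ereal_def)
  have c': "\<And>x. 0 < ereal x \<Longrightarrow> ereal x < \<infinity> \<Longrightarrow> isCont f x" using c by (simp add: zero_ereal_def)
  have nn': "AE x in lborel. 0 < ereal x \<longrightarrow> ereal x < \<infinity> \<longrightarrow> 0 \<le> f x" using nn by (simp add: zero_ereal_def)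
  have A': "((F \<circ> real_of_ereal) \<longlongrightarrow> A) (at_right 0)"
    unfolding zero_ereal_def ereal_tendsto_simps by (rule A)
  have B': "((F \<circ> real_of_ereal) \<longlongrightarrow> B) (at_left \<infinity>)"
    unfolding ereal_tendsto_simps by (rule B)
  note r = interval_integral_FTC_nonneg[OF lt F' c' nn' A' B']
  show "set_integrable lborel {0<..} f" using r(1) by (simp add: zero_ereal_def)
  show "(LBINT x:{0<..}. f x) = B - A" using r(2) by (simp add: interval_lebesgue_integral_0_infty)
qed

lemma nn_set_integral:
  fixes f :: "real \<Rightarrow> real"
  assumes "set_integrable lborel A f" "\<And>x. x \<in> A \<Longrightarrow> 0 \<le> f x"
  shows "(\<integral>\<^sup>+x. ennreal (indicator A x * f x) \<partial>lborel) = ennreal (LBINT x:A. f x)"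
proof -
  have i: "integrable lborel (\<lambda>x. indicator A x * f x)"
    using assms(1) unfolding set_integrable_def by simp
  have "AE x in lborel. 0 \<le> indicator A x * f x" using assms(2) by (auto simp: indicator_def)
  from nn_integral_eq_integral[OF i this] show ?thesis
    unfolding set_lebesgue_integral_def by simp
qed

lemma inv_aux: "a > 0 \<Longrightarrow> b > 0 \<Longrightarrow> 2 * (inverse b * (inverse a / 2)) = 1 / (a * (b::real))"
  by (simp add: field_simps)

lemma arctan_integral:
  fixes U :: real
  shows "(\<integral>\<^sup>+x. ennreal (indicator {0<..} x * (1 / (sqrt x * (1 + (sqrt x - U)^2)))) \<partial>lborel)
     = ennreal (pi + 2 * arctan U)"
proof -
  define f where "f x = 1 / (sqrt x * (1 + (sqrt x - U)^2))" for x :: real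
  define F where "F x = 2 * arctan (sqrt x - U)" for x :: real
  have d: "DERIV F x :> f x" if "x > 0" for x
  proof -
    have "DERIV F x :> 2 * (inverse (1 + (sqrt x - U)^2) * (inverse (sqrt x) / 2))"
      unfolding F_def using that
      by (auto intro!: derivative_eq_intros simp: power2_eq_square)
    moreover have "2 * (inverse (1 + (sqrt x - U)^2) * (inverse (sqrt x) / 2)) = f x"
      unfolding f_def using that by (intro inv_aux) (auto intro: add_pos_nonneg)
    ultimately show ?thesis by simp
  qed
  have c: "isCont f x" if "x > 0" for x
  proof -
    have "1 + (sqrt x - U)^2 > 0" by (simp add: add_pos_nonneg)
    then show ?thesis unfolding f_def using that by (auto intro!: continuous_intros)
  qed
  have nn: "0 \<le> f x" if "x > 0" for x unfolding f_def using that by (simp add: add_pos_nonneg)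
  have A: "(F \<longlongrightarrow> 2 * arctan (0 - U)) (at_right 0)"
  proof -
    have "((\<lambda>x. sqrt x) \<longlongrightarrow> sqrt 0) (at_right 0)"
      by (intro tendsto_intros tendsto_ident_at)
    then have s0: "((\<lambda>x. sqrt x) \<longlongrightarrow> 0) (at_right 0)" by simp
    have "((\<lambda>x. sqrt x - U) \<longlongrightarrow> 0 - U) (at_right 0)" by (rule tendsto_diff[OF s0 tendsto_const])
    then show ?thesis unfolding F_def by (rule tendsto_mult[OF tendsto_const tendsto_arctan])
  qed
  have B: "(F \<longlongrightarrow> 2 * (pi/2)) at_top"
  proof -
    have "filterlim (\<lambda>x. sqrt x - U) at_top at_top"
      by (rule filterlim_tendsto_add_at_top[OF tendsto_const sqrt_at_top, of "-U", simplified])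
    then have "((\<lambda>x. arctan (sqrt x - U)) \<longlongrightarrow> pi/2) at_top"
      by (rule filterlim_compose[OF tendsto_arctan_at_top])
    then show ?thesis unfolding F_def by (intro tendsto_intros)
  qed
  note r = FTC_0_infty[OF d c nn A B]
  have "(\<integral>\<^sup>+x. ennreal (indicator {0<..} x * f x) \<partial>lborel) = ennreal (LBINT x:{0<..}. f x)"
  proof -
    have "\<And>x. x \<in> {0<..} \<Longrightarrow> 0 \<le> f x" using nn by auto
    note nn_set_integral[OF r(1) this]
    then show ?thesis by simp
  qed
  also have "\<dots> = ennreal (pi + 2 * arctan U)" using r(2) by (simp add: arctan_minus)
  finally show ?thesis unfolding f_def .
qed

lemma power_tail_integral:
  fixes p :: real
  assumes "p > 0"
  shows "set_integrable lborel {0<..} (\<lambda>t. (1 + t) powr (-1 - p))"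
    "(LBINT t:{0<..}. (1 + t) powr (-1 - p)) = 1 / p"
proof -
  define f where "f t = (1 + t) powr (-1 - p)" for t :: real
  define F where "F t = - ((1 + t) powr (-p)) / p" for t :: real
  have d: "DERIV F x :> f x" if "x > 0" for x
  proof -
    have "DERIV F x :> - ((-p) * (1 + x) powr (-p - 1) * 1) / p"
      unfolding F_def using that
      by (auto intro!: derivative_eq_intros)
    moreover have "- ((-p) * (1 + x) powr (-p - 1) * 1) / p = f x"
    proof -
      have e: "-p - 1 = -1 - p" by simp
      show ?thesis unfolding f_def e using assms by simp
    qed
    ultimately show ?thesis by simp
  qed
  have c: "isCont f x" if "x > 0" for x
    unfolding f_def using that by (auto intro!: continuous_intros)
  have nn: "0 \<le> f x" if "x > 0" for x unfolding f_def by simp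
  have A: "(F \<longlongrightarrow> - ((1 + 0) powr (-p)) / p) (at_right 0)"
  proof -
    have "((\<lambda>x. (1 + x) powr (-p)) \<longlongrightarrow> (1 + 0) powr (-p)) (at_right 0)"
      by (intro tendsto_intros tendsto_ident_at) auto
    then show ?thesis unfolding F_def using assms by (intro tendsto_intros) auto
  qed
  have B: "(F \<longlongrightarrow> 0) at_top"
    unfolding F_def using assms by real_asymp
  note r = FTC_0_infty[OF d c nn A B]
  show "set_integrable lborel {0<..} (\<lambda>t. (1 + t) powr (-1 - p))" using r(1) unfolding f_def .
  show "(LBINT t:{0<..}. (1 + t) powr (-1 - p)) = 1 / p" using r(2) unfolding f_def by simp
qed



lemma E_ident:
  assumes "x > 0" "s \<ge> 0" "c = 2*Q + (1 - r)"
  shows "x powr (Q - r/2) * exp (-x + 2 * sqrt (s*x)) = exp (Gf s c (sqrt x)) / sqrt x"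
proof -
  have sx: "sqrt x > 0" using assms by simp
  have l: "ln (sqrt x) = ln x / 2" using assms by (simp add: ln_sqrt)
  have "exp (Gf s c (sqrt x)) / sqrt x = exp (Gf s c (sqrt x) - ln (sqrt x))"
    using sx by (simp add: exp_diff)
  also have "Gf s c (sqrt x) - ln (sqrt x) = (Q - r/2) * ln x + (-x + 2 * sqrt (s*x))"
    unfolding Gf_def l assms(3) using assms by (simp add: real_sqrt_mult algebra_simps)
  also have "exp \<dots> = x powr (Q - r/2) * exp (-x + 2 * sqrt (s*x))"
    using assms by (simp add: exp_add powr_def)
  finally show ?thesis by simp
qed

lemma hyp0_up2:
  assumes "0 \<le> r" "r \<le> 1/2" "z > 0"
  shows "hyp0 (1/2+r) z \<le> z powr (-r/2) * exp (2 * sqrt z)"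
proof -
  define X where "X = 2 * sqrt z"
  have X: "X > 0" "X^2/4 = z" using assms by (auto simp: X_def power_mult_distrib)
  have h: "hyp0 (1/2+r) z \<le> X powr (-r) * exp X"
    using hyp0_upper(2)[OF X(1) assms(1,2)] X(2) by simp
  have "X powr (-r) \<le> (sqrt z) powr (-r)"
    by (intro powr_mono2') (use assms in \<open>auto simp: X_def\<close>)
  also have "(sqrt z) powr (-r) = z powr (-r/2)"
    using assms by (simp add: powr_half_sqrt[symmetric] powr_powr)
  finally have le: "X powr (-r) \<le> z powr (-r/2)" .
  have "X powr (-r) * exp X \<le> z powr (-r/2) * exp X" using le by (intro mult_right_mono) auto
  with h have "hyp0 (1/2+r) z \<le> z powr (-r/2) * exp X" by linarith
  then show ?thesis by (simp add: X_def)
qed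

lemma hyp0_low2:
  assumes "0 \<le> r" "r \<le> 1/2" "z \<ge> 1"
  shows "hyp0 (1/2+r) z \<ge> (1/12) * (z powr (-r/2) * exp (2 * sqrt z))"
proof -
  define X where "X = 2 * sqrt z"
  have X: "X > 0" "X^2/4 = z" using assms by (auto simp: X_def power_mult_distrib)
  have h: "hyp0 (1/2+r) z \<ge> (1/4) * (1+X) powr (-r) * exp X"
    using hyp0_lower[OF X(1) assms(1,2)] X(2) by simp
  have sz: "sqrt z \<ge> 1" using assms by simp
  have p1: "1 + X > 0" using X(1) by linarith
  have p2: "1 + X \<le> 3 * sqrt z" unfolding X_def using sz by linarith
  have "(3 * sqrt z) powr (-r) \<le> (1+X) powr (-r)"
    by (rule powr_mono2'[OF _ p1 p2]) (use assms in simp)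
  moreover have "(3 * sqrt z) powr (-r) = 3 powr (-r) * z powr (-r/2)"
    using assms by (simp add: powr_mult powr_half_sqrt[symmetric] powr_powr)
  moreover have "3 powr (-r) \<ge> 3 powr (-1)" using assms by (intro powr_mono) auto
  moreover have "(3::real) powr (-1) = 1/3" by (simp add: powr_minus_divide)
  ultimately have "(1+X) powr (-r) \<ge> (1/3) * z powr (-r/2)"
    by (smt (verit) mult_right_mono powr_ge_zero)
  then have k: "(1/4) * ((1/3) * z powr (-r/2)) * exp X \<le> (1/4) * (1+X) powr (-r) * exp X"
    by (intro mult_right_mono mult_left_mono) auto
  have "(1/12) * (z powr (-r/2) * exp X) = (1/4) * ((1/3) * z powr (-r/2)) * exp X" by simp
  also have "\<dots> \<le> (1/4) * (1+X) powr (-r) * exp X" by (rule k)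
  also have "\<dots> \<le> hyp0 (1/2+r) z" by (rule h)
  finally show ?thesis by (simp add: X_def)
qed

lemma U_ge:
  assumes "s \<ge> 1" "Q \<ge> 1" "0 \<le> r" "r \<le> 1/2"
  shows "u0 (1-r) Q (-s) \<ge> sqrt s" "u0 (1-r) Q (-s) > 0"
    "2 * (u0 (1-r) Q (-s))^2 - 2 * sqrt s * u0 (1-r) Q (-s) = 2*Q + (1-r)"
proof -
  note uc = u0_crit[of s Q "1-r"]
  have p: "s > 0" "Q > 0" "1 - r > 0" using assms by auto
  show U0: "u0 (1-r) Q (-s) > 0" using uc(1)[OF p] .
  show e: "2 * (u0 (1-r) Q (-s))^2 - 2 * sqrt s * u0 (1-r) Q (-s) = 2*Q + (1-r)" using uc(2)[OF p] .
  have "u0 (1-r) Q (-s) * (u0 (1-r) Q (-s) - sqrt s) > 0"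
    using e p by (simp add: power2_eq_square algebra_simps)
  then show "u0 (1-r) Q (-s) \<ge> sqrt s" using U0 by (simp add: zero_less_mult_iff)
qed



lemma M_bounds:
  fixes r Q s :: real
  assumes r0: "0 \<le> r" and r1: "r \<le> 1/2" and Q1: "Q \<ge> 1" and s1: "s \<ge> 1"
  defines "c \<equiv> 2*Q + (1-r)" and "U \<equiv> u0 (1-r) Q (-s)"
  defines "K \<equiv> s powr (-r/2) * exp (Gf s c U)"
  shows "kummerM (1/2 + r - (Q+1)) (1/2+r) (-s) \<le> 2*pi * (exp (-s) * K / Gamma (Q+1))"
    "(exp (-3)/12) * (exp (-s) * K / Gamma (Q+1)) \<le> kummerM (1/2 + r - (Q+1)) (1/2+r) (-s)"
proof -
  note Uf = U_ge[OF s1 Q1 r0 r1]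
  have U0: "U > 0" and Us: "U \<ge> sqrt s" and Ucrit: "2 * U^2 - 2 * sqrt s * U = c"
    using Uf unfolding U_def c_def by auto
  have c0: "c \<ge> 0" using Q1 r1 by (simp add: c_def)
  have spos: "s > 0" using s1 by simp
  have Kpos: "K > 0" unfolding K_def using spos by simp
  define a where "a = 1/2 + r"
  define \<phi> where "\<phi> x = indicator {0..} x * x powr Q / exp x * hyp0 a (s*x)" for x
  define b where "b k = pochhammer (Q+1) k * cf a k * s^k" for k
  define \<Gamma> where "\<Gamma> = Gamma (Q+1)"
  have \<Gamma>pos: "\<Gamma> > 0" unfolding \<Gamma>_def using Q1 by (intro Gamma_real_pos) simp
  have apos: "a > 0" using r0 by (simp add: a_def)
  have bnn: "b k \<ge> 0" for k
    unfolding b_def using cf_pos[OF apos, of k] spos Q1 by (auto intro!: mult_nonneg_nonneg pochhammer_nonneg)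
  have ident: "(\<integral>\<^sup>+ x. ennreal (\<phi> x) \<partial>lborel) = (\<Sum>k. ennreal (b k * \<Gamma>))"
    unfolding \<phi>_def b_def \<Gamma>_def a_def using int_identity[OF r0 r1 spos, of Q] Q1 by simp
  have hyp0_nn: "hyp0 a z \<ge> 0" if "z > 0" for z
  proof -
    have sm: "summable (\<lambda>k. cf a k * z ^ k)" unfolding a_def using hyp0_summable[OF r0 r1 that] .
    show ?thesis unfolding hyp0_def
      using cf_pos[OF apos] that by (intro suminf_nonneg[OF sm]) (auto intro!: mult_nonneg_nonneg less_imp_le)
  qed
  have phi_nn: "\<phi> x \<ge> 0" for x
    unfolding \<phi>_def using hyp0_nn[of "s*x"] spos
    by (cases "x > 0") (auto simp: indicator_def)
  have phi_eq: "\<phi> x = x powr Q / exp x * hyp0 a (s*x)" if "x > 0" for x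
    unfolding \<phi>_def using that by simp
  have core: "x powr Q / exp x * ((s*x) powr (-r/2) * exp (2 * sqrt (s*x)))
      = s powr (-r/2) * (exp (Gf s c (sqrt x)) / sqrt x)" if "x > 0" for x
  proof -
    have "x powr Q / exp x * ((s*x) powr (-r/2) * exp (2 * sqrt (s*x)))
        = s powr (-r/2) * ((x powr Q * x powr (-r/2)) * (exp (2 * sqrt (s*x)) / exp x))"
      using that spos by (simp add: powr_mult field_simps)
    also have "(x powr Q * x powr (-r/2)) = x powr (Q - r/2)" by (simp add: powr_add[symmetric])
    also have "exp (2 * sqrt (s*x)) / exp x = exp (-x + 2 * sqrt (s*x))" by (simp add: exp_add[symmetric] exp_diff)
    also have "x powr (Q - r/2) * exp (-x + 2 * sqrt (s*x)) = exp (Gf s c (sqrt x)) / sqrt x"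
      using that spos by (intro E_ident) (auto simp: c_def)
    finally show ?thesis .
  qed
  define maj where "maj x = 1 / (sqrt x * (1 + (sqrt x - U)^2))" for x
  have up_pt: "\<phi> x \<le> K * (indicator {0<..} x * maj x)" for x
  proof (cases "x > 0")
    case True
    have sx: "sqrt x > 0" using True by simp
    have h: "hyp0 a (s*x) \<le> (s*x) powr (-r/2) * exp (2 * sqrt (s*x))"
      unfolding a_def using hyp0_up2[OF r0 r1] True spos by simp
    have g: "Gf s c (sqrt x) \<le> Gf s c U - (sqrt x - U)^2"
      by (rule Gf_upper[OF U0 sx Ucrit c0])
    have e1: "exp (Gf s c (sqrt x)) \<le> exp (Gf s c U) / exp ((sqrt x - U)^2)"
      using g by (simp add: exp_diff[symmetric])
    have e2: "exp (Gf s c U) / exp ((sqrt x - U)^2) \<le> exp (Gf s c U) / (1 + (sqrt x - U)^2)"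
    proof -
      have p: "1 + (sqrt x - U)^2 > 0" by (simp add: add_pos_nonneg)
      show ?thesis by (intro divide_left_mono exp_ge_add_one_self) (use p in \<open>auto intro!: mult_pos_pos\<close>)
    qed
    have "\<phi> x \<le> x powr Q / exp x * ((s*x) powr (-r/2) * exp (2 * sqrt (s*x)))"
      unfolding phi_eq[OF True] using h True by (intro mult_left_mono) auto
    also have "\<dots> = s powr (-r/2) * (exp (Gf s c (sqrt x)) / sqrt x)" by (rule core[OF True])
    also have "\<dots> \<le> s powr (-r/2) * ((exp (Gf s c U) / (1 + (sqrt x - U)^2)) / sqrt x)"
      using e1 e2 sx by (intro mult_left_mono divide_right_mono) auto
    also have "\<dots> = K * (indicator {0<..} x * maj x)"
      unfolding K_def maj_def using True by (simp add: field_simps)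
    finally show ?thesis .
  next
    case False
    then have "\<phi> x = 0" unfolding \<phi>_def using Q1 by (cases "x = 0") (auto simp: indicator_def)
    then show ?thesis using False by simp
  qed
  define L where "L = (1/12) * s powr (-r/2) * exp (Gf s c U - 3) / (U+1)"
  have Lnn: "L \<ge> 0" unfolding L_def using U0 by simp
  have low_pt: "L * indicator {U^2..(U+1)^2} x \<le> \<phi> x" for x
  proof (cases "x \<in> {U^2..(U+1)^2}")
    case True
    have xU: "U^2 \<le> x" "x \<le> (U+1)^2" using True by auto
    have xpos: "x > 0" using xU U0 by (smt (verit) zero_less_power)
    have sqx: "U \<le> sqrt x" "sqrt x \<le> U + 1"
      using real_sqrt_le_mono[OF xU(1)] real_sqrt_le_mono[OF xU(2)] U0 by auto
    have "s \<le> U^2" using Us spos by (metis real_sqrt_le_iff real_sqrt_pow2 less_imp_le power2_le_iff_abs_le abs_of_nonneg real_sqrt_ge_zero order_trans U0)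
    then have x1: "x \<ge> 1" using xU s1 by linarith
    have sx1: "s*x \<ge> 1" using mult_mono[of 1 s 1 x] x1 s1 by simp
    have h: "hyp0 a (s*x) \<ge> (1/12) * ((s*x) powr (-r/2) * exp (2 * sqrt (s*x)))"
      unfolding a_def by (rule hyp0_low2[OF r0 r1 sx1])
    have g: "Gf s c (sqrt x) \<ge> Gf s c U - 3"
      by (rule Gf_lower[OF U0 sqx Ucrit c0]) (use spos in simp)
    have "L * indicator {U^2..(U+1)^2} x = (1/12) * (s powr (-r/2) * (exp (Gf s c U - 3) / (U+1)))"
      unfolding L_def using True by simp
    also have "\<dots> \<le> (1/12) * (s powr (-r/2) * (exp (Gf s c (sqrt x)) / sqrt x))"
      using g sqx U0 xpos by (intro mult_left_mono frac_le) auto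
    also have "\<dots> = (1/12) * (x powr Q / exp x * ((s*x) powr (-r/2) * exp (2 * sqrt (s*x))))"
      using core[OF xpos] by simp
    also have "\<dots> = x powr Q / exp x * ((1/12) * ((s*x) powr (-r/2) * exp (2 * sqrt (s*x))))" by simp
    also have "\<dots> \<le> x powr Q / exp x * hyp0 a (s*x)"
      using h by (intro mult_left_mono) auto
    also have "\<dots> = \<phi> x" using phi_eq[OF xpos] by simp
    finally show ?thesis .
  next
    case False
    then show ?thesis using phi_nn[of x] by simp
  qed
  have majmeas: "(\<lambda>x. ennreal (indicator {0<..} x * maj x)) \<in> borel_measurable lborel"
    unfolding maj_def by measurable
  have int_up: "(\<integral>\<^sup>+ x. ennreal (\<phi> x) \<partial>lborel) \<le> ennreal (K * (pi + 2 * arctan U))"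
  proof -
    have "(\<integral>\<^sup>+ x. ennreal (\<phi> x) \<partial>lborel) \<le> (\<integral>\<^sup>+ x. ennreal K * ennreal (indicator {0<..} x * maj x) \<partial>lborel)"
    proof (rule nn_integral_mono)
      fix x
      have "ennreal (\<phi> x) \<le> ennreal (K * (indicator {0<..} x * maj x))" by (rule ennreal_leI[OF up_pt])
      also have "\<dots> = ennreal K * ennreal (indicator {0<..} x * maj x)"
        using Kpos by (intro ennreal_mult) (auto simp: maj_def indicator_def intro!: add_pos_nonneg)
      finally show "ennreal (\<phi> x) \<le> ennreal K * ennreal (indicator {0<..} x * maj x)" .
    qed
    also have "\<dots> = ennreal K * (\<integral>\<^sup>+ x. ennreal (indicator {0<..} x * maj x) \<partial>lborel)"
      by (rule nn_integral_cmult[OF majmeas])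
    also have "\<dots> = ennreal K * ennreal (pi + 2 * arctan U)"
      unfolding maj_def by (simp only: arctan_integral)
    also have "\<dots> = ennreal (K * (pi + 2 * arctan U))"
    proof -
      have "pi + 2 * arctan U \<ge> 0" using arctan_lbound[of U] by linarith
      then show ?thesis using Kpos by (intro ennreal_mult[symmetric]) auto
    qed
    finally show ?thesis .
  qed
  have int_low: "ennreal (L * ((U+1)^2 - U^2)) \<le> (\<integral>\<^sup>+ x. ennreal (\<phi> x) \<partial>lborel)"
  proof -
    have "(\<integral>\<^sup>+ x. ennreal (\<phi> x) \<partial>lborel) \<ge> (\<integral>\<^sup>+ x. ennreal L * indicator {U^2..(U+1)^2} x \<partial>lborel)"
    proof (rule nn_integral_mono)
      fix x
      have "ennreal L * indicator {U^2..(U+1)^2} x = ennreal (L * indicator {U^2..(U+1)^2} x)"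
        using Lnn by (simp add: indicator_def)
      also have "\<dots> \<le> ennreal (\<phi> x)" by (rule ennreal_leI[OF low_pt])
      finally show "ennreal L * indicator {U^2..(U+1)^2} x \<le> ennreal (\<phi> x)" .
    qed
    moreover have "(\<integral>\<^sup>+ x. ennreal L * indicator {U^2..(U+1)^2} x \<partial>lborel) = ennreal L * emeasure lborel {U^2..(U+1)^2}"
      by (rule nn_integral_cmult_indicator) simp
    moreover have "emeasure lborel {U^2..(U+1)^2} = ennreal ((U+1)^2 - U^2)"
      using U0 by (intro emeasure_lborel_Icc) (simp add: power_mono)
    moreover have "ennreal L * ennreal ((U+1)^2 - U^2) = ennreal (L * ((U+1)^2 - U^2))"
      using Lnn U0 by (intro ennreal_mult[symmetric]) (auto simp: power_mono)
    ultimately show ?thesis by simp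
  qed
  have bG_nn: "b k * \<Gamma> \<ge> 0" for k using bnn \<Gamma>pos by simp
  have fin: "(\<Sum>k. ennreal (b k * \<Gamma>)) \<noteq> top"
    using int_up unfolding ident by (auto simp: top_unique)
  have smG: "summable (\<lambda>k. b k * \<Gamma>)" by (rule summable_suminf_not_top[OF bG_nn fin])
  have smb: "summable b"
  proof -
    have "summable (\<lambda>k. b k * \<Gamma> * (1/\<Gamma>))" by (rule summable_mult2[OF smG])
    then show ?thesis using \<Gamma>pos by simp
  qed
  define S where "S = (\<Sum>k. b k)"
  have Snn: "S \<ge> 0" unfolding S_def using bnn by (intro suminf_nonneg[OF smb]) auto
  have sumeq: "(\<Sum>k. ennreal (b k * \<Gamma>)) = ennreal (S * \<Gamma>)"
    unfolding S_def using suminf_ennreal2[OF bG_nn smG] suminf_mult2[OF smb, of \<Gamma>] by simp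
  have up: "S * \<Gamma> \<le> K * (pi + 2 * arctan U)"
  proof -
    have "ennreal (S * \<Gamma>) \<le> ennreal (K * (pi + 2 * arctan U))" using int_up unfolding ident sumeq .
    moreover have "pi + 2 * arctan U \<ge> 0" using arctan_lbound[of U] by linarith
    ultimately show ?thesis using Kpos by (subst (asm) ennreal_le_iff) auto
  qed
  have low: "L * ((U+1)^2 - U^2) \<le> S * \<Gamma>"
  proof -
    have "ennreal (L * ((U+1)^2 - U^2)) \<le> ennreal (S * \<Gamma>)" using int_low unfolding ident sumeq .
    then show ?thesis using Snn \<Gamma>pos by (subst (asm) ennreal_le_iff) auto
  qed
  have kum: "kummerM (1/2 + r - (Q+1)) (1/2+r) (-s) = exp (-s) * S"
    unfolding S_def b_def a_def using kummer_transform[OF apos _ smb[unfolded b_def] bnn[unfolded b_def], of] spos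
    by (simp add: a_def)
  have au: "arctan U \<le> pi/2" using arctan_ubound[of U] by simp
  have "K * (pi + 2 * arctan U) \<le> K * (2*pi)" using au Kpos by (intro mult_left_mono) auto
  then have "S * \<Gamma> \<le> K * (2*pi)" using up by linarith
  then have up2: "S * \<Gamma> \<le> 2*pi * K" by (simp add: mult_ac)
  have low2: "(exp (-3)/12) * K \<le> S * \<Gamma>"
  proof -
    have e3: "exp (Gf s c U - 3) = exp (Gf s c U) * exp (-3)" by (simp add: exp_add[symmetric])
    have dm: "\<And>X d::real. d \<noteq> 0 \<Longrightarrow> X / d * d = X" by simp
    have "L * (U+1) = (1/12) * s powr (-r/2) * exp (Gf s c U - 3)" unfolding L_def
      by (rule dm) (use U0 in simp)
    then have "(exp (-3)/12) * K = L * (U+1)" unfolding K_def e3 by (simp add: mult_ac)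
    also have "\<dots> \<le> L * ((U+1)^2 - U^2)"
      using Lnn U0 by (intro mult_left_mono) (auto simp: power2_eq_square algebra_simps)
    finally show ?thesis using low by simp
  qed
  show "kummerM (1/2 + r - (Q+1)) (1/2+r) (-s) \<le> 2*pi * (exp (-s) * K / Gamma (Q+1))"
    unfolding kum using up2 \<Gamma>pos unfolding \<Gamma>_def by (simp add: field_simps)
  show "(exp (-3)/12) * (exp (-s) * K / Gamma (Q+1)) \<le> kummerM (1/2 + r - (Q+1)) (1/2+r) (-s)"
    unfolding kum using low2 \<Gamma>pos unfolding \<Gamma>_def by (simp add: field_simps)
qed



lemma t0_props:
  assumes "s > 0" "Q > 0"
  shows "t0 Q (-s) > 0" "t0 Q (-s) * (t0 Q (-s) + 1) = Q / s"
proof -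
  define R where "R = sqrt (1 + 4 * Q / s)"
  have q0: "0 \<le> 1 + 4 * Q / s" using assms by (intro add_nonneg_nonneg) auto
  have R2: "R^2 = 1 + 4 * Q / s" unfolding R_def by (rule real_sqrt_pow2[OF q0])
  have R1: "R > 1" unfolding R_def using assms by simp
  have T: "t0 Q (-s) = (-1 + R) / 2" unfolding t0_def R_def by simp
  show "t0 Q (-s) > 0" unfolding T using R1 by simp
  have "(-1 + R) / 2 * ((-1 + R) / 2 + 1) = (R^2 - 1) / 4" by (simp add: power2_eq_square field_simps)
  also have "\<dots> = Q / s" unfolding R2 using assms by (simp add: field_simps)
  finally show "t0 Q (-s) * (t0 Q (-s) + 1) = Q / s" unfolding T .
qed

lemma Lk1: "(a::real) \<noteq> 0 \<Longrightarrow> T \<noteq> 0 \<Longrightarrow> s*T*(T+1) * (h/(a*T)) = s*(T+1)*h/a"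
  by (simp add: field_simps)
lemma Lk2: "(a::real) \<noteq> 0 \<Longrightarrow> T \<noteq> 0 \<Longrightarrow> s*T*(T+1) * (h/(a*T))^2 = s*(T+1)*h^2/(a^2*T)"
  by (simp add: field_simps power2_eq_square)
lemma Lk3: "(a::real) > 0 \<Longrightarrow> T > 0 \<Longrightarrow> x + a*T > 0 \<Longrightarrow> 1 + x/(a*T) > 0"
proof -
  assume a: "a > 0" "T > 0" "x + a*T > 0"
  then have "a*T > 0" by simp
  then have "(x + a*T)/(a*T) = x/(a*T) + 1" using a by (simp add: add_divide_distrib)
  then have "1 + x/(a*T) = (x + a*T)/(a*T)" by simp
  then show ?thesis using a \<open>a*T > 0\<close> by simp
qed

lemma Lr:
  assumes "(a::real) = t + 1" "b = T + 1" "a \<noteq> 0" "T \<noteq> 0" "b \<noteq> 0"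
  shows "(t/a)/(T/b) = 1 + (t-T)/(a*T)"
proof -
  have n: "a*T \<noteq> 0" using assms by simp
  have "(t/a)/(T/b) = (t*b)/(a*T)" using assms by (simp add: field_simps)
  also have "t*b = (t - T) + a*T" using assms(1,2) by (simp add: algebra_simps)
  also have "((t - T) + a*T)/(a*T) = (t-T)/(a*T) + 1" using n by (simp add: add_divide_distrib)
  finally show ?thesis by simp
qed

lemma F_diff:
  assumes "s > 0" "T > 0" "t > 0" "Q = s * T * (T + 1)"
  shows "Ffun Q (-s) t - Ffun Q (-s) T = - s * (t - T) + Q * ln (1 + (t - T) / ((t+1) * T))"
proof -
  have a: "t / (t+1) > 0" "T / (T+1) > 0" using assms by auto
  have "ln (t / (t+1)) - ln (T / (T+1)) = ln ((t / (t+1)) / (T / (T+1)))"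
    by (rule ln_divide_pos[OF a, symmetric])
  also have "(t / (t+1)) / (T / (T+1)) = 1 + (t - T) / ((t+1) * T)"
    by (rule Lr) (use assms in auto)
  finally have "ln (t / (t+1)) - ln (T / (T+1)) = ln (1 + (t - T) / ((t+1) * T))" .
  then show ?thesis unfolding Ffun_def by (simp add: algebra_simps)
qed

lemma F_upper:
  assumes "s > 0" "T > 0" "t > 0" "Q = s * T * (T + 1)"
  shows "Ffun Q (-s) t \<le> Ffun Q (-s) T"
proof -
  define k where "k = (t - T) / ((t+1) * T)"
  have tT: "t * T > 0" using assms by simp
  have e0: "(t - T) + (t+1)*T = t + t*T" by (simp add: algebra_simps)
  have x0: "(t - T) + (t+1)*T > 0" using e0 tT assms by linarith
  have k1: "1 + k > 0" unfolding k_def using assms x0 by (intro Lk3) auto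
  have "ln (1 + k) \<le> (1 + k) - 1" by (rule ln_le_minus_one[OF k1])
  then have "Q * ln (1 + k) \<le> Q * k" using assms by (intro mult_left_mono) (auto intro!: mult_nonneg_nonneg)
  also have "Q * k = s * (T + 1) * (t - T) / (t + 1)" unfolding k_def assms(4) using assms by (intro Lk1) auto
  finally have l: "Q * ln (1 + k) \<le> s * (T + 1) * (t - T) / (t + 1)" .
  have e: "- s * (t - T) + s * (T + 1) * (t - T) / (t + 1) = - s * (t - T)^2 / (t + 1)"
    using assms by (simp add: field_simps power2_eq_square)
  have "- s * (t - T)^2 / (t + 1) \<le> 0" using assms by (simp add: divide_nonpos_pos)
  then show ?thesis using F_diff[OF assms] l e unfolding k_def by linarith
qed

lemma F_lower:
  assumes "s > 0" "T > 0" "T \<le> t" "Q = s * T * (T + 1)" "s * (t - T)^2 \<le> T"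
  shows "Ffun Q (-s) t \<ge> Ffun Q (-s) T - 2"
proof -
  have tp: "t > 0" using assms by simp
  define h where "h = t - T"
  have h0: "h \<ge> 0" using assms by (simp add: h_def)
  define k where "k = h / ((t+1) * T)"
  have k0: "k \<ge> 0" unfolding k_def using assms h0 by simp
  have "ln (1 + k) \<ge> k - k^2" by (rule ln_lower2[OF k0])
  then have "Q * ln (1 + k) \<ge> Q * (k - k^2)" using assms by (intro mult_left_mono) (auto intro!: mult_nonneg_nonneg)
  also have "Q * (k - k^2) = s * (T + 1) * h / (t + 1) - s * (T + 1) * h^2 / ((t+1)^2 * T)"
  proof -
    have "Q * k = s * (T + 1) * h / (t + 1)" unfolding k_def assms(4) using assms tp by (intro Lk1) auto
    moreover have "Q * k^2 = s * (T + 1) * h^2 / ((t+1)^2 * T)" unfolding k_def assms(4) using assms tp by (intro Lk2) auto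
    ultimately show ?thesis by (simp add: right_diff_distrib)
  qed
  finally have l: "Q * ln (1 + k) \<ge> s * (T + 1) * h / (t + 1) - s * (T + 1) * h^2 / ((t+1)^2 * T)" .
  have e: "- (s * h) + s * (T + 1) * h / (t + 1) = - (s * h^2 / (t + 1))"
    using assms tp by (simp add: h_def field_simps power2_eq_square)
  have b1: "s * h^2 / (t + 1) \<le> s * h^2 / T"
    using assms h0 by (intro divide_left_mono) (auto simp: h_def)
  have b2: "s * (T + 1) * h^2 / ((t+1)^2 * T) \<le> s * h^2 / T"
  proof -
    have q1: "(t+1)^2 = (t+1) + t*(t+1)" by (simp add: power2_eq_square algebra_simps)
    have q2: "t*(t+1) \<ge> 0" using tp by simp
    have q3: "T + 1 \<le> (t+1)^2" using q1 q2 assms by linarith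
    have "(T + 1) / (t+1)^2 \<le> 1" using q3 tp by (simp add: pos_divide_le_eq)
    then have "s * h^2 / T * ((T + 1) / (t+1)^2) \<le> s * h^2 / T * 1"
      using assms h0 by (intro mult_left_mono) auto
    then show ?thesis by (simp add: field_simps)
  qed
  have b3: "s * h^2 / T \<le> 1" using assms by (simp add: h_def)
  have "Ffun Q (-s) t - Ffun Q (-s) T = - s * h + Q * ln (1 + k)"
    unfolding h_def k_def by (rule F_diff[OF assms(1,2) tp assms(4)])
  moreover have "- s * h = - (s * h)" by simp
  ultimately have D: "Ffun Q (-s) t - Ffun Q (-s) T = - (s * h) + Q * ln (1 + k)" by simp
  define B where "B = s * (T + 1) * h / (t + 1)"
  define X where "X = s * (T + 1) * h^2 / ((t+1)^2 * T)"
  define Y where "Y = s * h^2 / (t + 1)"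
  define Z where "Z = s * h^2 / T"
  have l': "B - X \<le> Q * ln (1 + k)" using l unfolding B_def X_def .
  have e': "- (s * h) + B = - Y" using e unfolding B_def Y_def .
  have b1': "Y \<le> Z" using b1 unfolding Y_def Z_def .
  have b2': "X \<le> Z" using b2 unfolding X_def Z_def .
  have b3': "Z \<le> 1" using b3 unfolding Z_def .
  have "Ffun Q (-s) t - Ffun Q (-s) T \<ge> -2" using D l' e' b1' b2' b3' by linarith
  then show ?thesis by simp
qed



lemma psi_ident:
  assumes "t > 0" "p > 0"
  shows "exp (-s * t) * t powr Q * (1 + t) powr (-Q-1-p) = exp (Ffun Q (-s) t) * (1 + t) powr (-1-p)"
proof -
  have tp: "t + 1 > 0" using assms by simp
  have "exp (Ffun Q (-s) t) = exp (-s * t) * exp (Q * ln (t / (t+1)))"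
    unfolding Ffun_def by (rule exp_add)
  also have "exp (Q * ln (t / (t+1))) = (t / (t+1)) powr Q"
    using assms tp by (simp add: powr_def mult.commute)
  also have "\<dots> = t powr Q / (1+t) powr Q" by (simp add: powr_divide add.commute)
  finally have e1: "exp (Ffun Q (-s) t) = exp (-s * t) * (t powr Q / (1+t) powr Q)" .
  have e2: "(1 + t) powr (-Q-1-p) = (1+t) powr (-1-p) / (1+t) powr Q"
  proof -
    have ex: "-Q-1-p = (-Q) + (-1-p)" by simp
    have "(1 + t) powr (-Q-1-p) = (1+t) powr (-Q) * (1+t) powr (-1-p)"
      by (simp only: ex powr_add)
    then show ?thesis by (simp add: powr_minus divide_inverse mult.commute)
  qed
  show ?thesis unfolding e1 e2 by (simp add: field_simps)
qed

lemma aux_q: "(q::real) \<noteq> 0 \<Longrightarrow> s \<noteq> 0 \<Longrightarrow> (q * q) / (s * (2 * q)) = q / (2 * s)"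
  by (simp add: field_simps)
lemma aux_ch: "(r2::real) \<noteq> 0 \<Longrightarrow> s \<noteq> 0 \<Longrightarrow> E * e2 * ((1/9) * A) * (B / (r2 * s)) = (e2 / (9 * r2)) * (A * B) * ((1/s) * E)"
  by (simp add: field_simps)
lemma aux_fin: "(G::real) \<noteq> 0 \<Longrightarrow> k * P * (S * (a * b) / G) = a / G * (k * P * (S * b))"
  by (simp add: field_simps)

lemma T_bounds:
  fixes p Q s \<alpha> \<beta> :: real
  assumes p0: "0 < p" and p1: "p \<le> 1/2" and Q1: "Q \<ge> 1" and s1: "s \<ge> 1"
    and al: "\<alpha> = 1 - p" and Qd: "Q = \<alpha> - \<beta> - 1"
  defines "T \<equiv> t0 Q (-s)"
  defines "FT \<equiv> Ffun Q (-s) T"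
  shows "tricomiT \<beta> \<alpha> (-s) \<le> (1/p) * (exp (-s + FT) / Gamma (Q+1))"
    "(exp (-2) / (9 * sqrt 2)) * Q powr (-1/4 - p/2) * (s powr (-1) * exp (-s + FT) / Gamma (Q+1))
       \<le> tricomiT \<beta> \<alpha> (-s)"
proof -
  have spos: "s > 0" and Qpos: "Q > 0" using s1 Q1 by auto
  note tp = t0_props[OF spos Qpos]
  have T0: "T > 0" using tp(1) unfolding T_def .
  have TQ: "Q = s * T * (T + 1)" using tp(2) spos unfolding T_def by (simp add: field_simps)
  define \<psi> where "\<psi> t = exp (-s * t) * t powr Q * (1 + t) powr (-Q-1-p)" for t
  have tri: "tricomiT \<beta> \<alpha> (-s) = exp (-s) / Gamma (Q+1) * (LBINT t:{0<..}. \<psi> t)"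
  proof -
    have a1: "\<alpha> - \<beta> = Q + 1" "\<alpha> - \<beta> - 1 = Q" "\<beta> - 1 = -Q-1-p" using Qd al by auto
    show ?thesis unfolding tricomiT_def a1 \<psi>_def by (simp add: mult.commute)
  qed
  have psi_eq: "\<psi> t = exp (Ffun Q (-s) t) * (1 + t) powr (-1-p)" if "t > 0" for t
    unfolding \<psi>_def using psi_ident[OF that p0] .
  have psi_nn: "\<psi> t \<ge> 0" for t unfolding \<psi>_def by simp
  have psi_up: "\<psi> t \<le> exp FT * (1 + t) powr (-1-p)" if "t > 0" for t
  proof -
    have "Ffun Q (-s) t \<le> FT" unfolding FT_def using F_upper[OF spos T0 that TQ] .
    then show ?thesis unfolding psi_eq[OF that] by (intro mult_right_mono) auto
  qed
  note pt = power_tail_integral[OF p0]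
  have intf: "set_integrable lborel {0<..} (\<lambda>t. exp FT * (1 + t) powr (-1-p))"
    using pt(1) by simp
  have meas: "set_borel_measurable lborel {0<..} \<psi>"
    unfolding set_borel_measurable_def \<psi>_def by measurable
  have intpsi: "set_integrable lborel {0<..} \<psi>"
  proof (rule set_integrable_bound[OF intf meas])
    show "AE x in lborel. x \<in> {0<..} \<longrightarrow> norm (\<psi> x) \<le> norm (exp FT * (1 + x) powr (-1-p))"
      using psi_up psi_nn by (intro AE_I2) auto
  qed
  have up: "(LBINT t:{0<..}. \<psi> t) \<le> exp FT * (1/p)"
  proof -
    have "(LBINT t:{0<..}. \<psi> t) \<le> (LBINT t:{0<..}. exp FT * (1 + t) powr (-1-p))"
      by (rule set_integral_mono[OF intpsi intf]) (use psi_up in simp)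
    also have "\<dots> = exp FT * (1/p)" using pt(2) by simp
    finally show ?thesis .
  qed
  show "tricomiT \<beta> \<alpha> (-s) \<le> (1/p) * (exp (-s + FT) / Gamma (Q+1))"
  proof -
    have G: "Gamma (Q+1) > 0" using Q1 by (intro Gamma_real_pos) simp
    have "tricomiT \<beta> \<alpha> (-s) \<le> exp (-s) / Gamma (Q+1) * (exp FT * (1/p))"
      unfolding tri using up G by (intro mult_left_mono) auto
    also have "\<dots> = (1/p) * (exp (-s) * exp FT / Gamma (Q+1))" by simp
    finally show ?thesis unfolding exp_add .
  qed
  define h where "h = sqrt (T / s)"
  have h0: "h > 0" unfolding h_def using T0 spos by simp
  have h2: "h^2 = T / s" unfolding h_def using T0 spos by simp
  define c where "c = exp (FT - 2) * (1 + T + h) powr (-1-p)"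
  have c0: "c \<ge> 0" unfolding c_def by simp
  have low_pt: "c * indicator {T..T+h} t \<le> indicator {0<..} t * \<psi> t" for t
  proof (cases "t \<in> {T..T+h}")
    case True
    have tT: "T \<le> t" "t \<le> T + h" using True by auto
    have t0': "t > 0" using tT T0 by linarith
    have sq: "s * (t - T)^2 \<le> T"
    proof -
      have "(t - T)^2 \<le> h^2" using tT by (intro power_mono) auto
      then have "s * (t - T)^2 \<le> s * h^2" using spos by (intro mult_left_mono) auto
      also have "\<dots> = T" unfolding h2 using spos by simp
      finally show ?thesis .
    qed
    have F: "Ffun Q (-s) t \<ge> FT - 2" unfolding FT_def by (rule F_lower[OF spos T0 tT(1) TQ sq])
    have P: "(1 + T + h) powr (-1-p) \<le> (1 + t) powr (-1-p)"
      by (rule powr_mono2') (use p0 tT t0' in auto)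
    have "c * indicator {T..T+h} t = exp (FT - 2) * (1 + T + h) powr (-1-p)"
      unfolding c_def using True by simp
    also have "\<dots> \<le> exp (Ffun Q (-s) t) * (1 + t) powr (-1-p)"
      using F P by (intro mult_mono) auto
    also have "\<dots> = indicator {0<..} t * \<psi> t" using psi_eq[OF t0'] t0' by simp
    finally show ?thesis .
  next
    case False
    then show ?thesis using psi_nn[of t] by (auto simp: indicator_def)
  qed
  have low: "c * h \<le> (LBINT t:{0<..}. \<psi> t)"
  proof -
    have "ennreal (LBINT t:{0<..}. \<psi> t) = (\<integral>\<^sup>+ t. ennreal (indicator {0<..} t * \<psi> t) \<partial>lborel)"
      by (rule nn_set_integral[OF intpsi, symmetric]) (use psi_nn in simp)
    also have "\<dots> \<ge> (\<integral>\<^sup>+ t. ennreal c * indicator {T..T+h} t \<partial>lborel)"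
    proof (rule nn_integral_mono)
      fix t
      have "ennreal c * indicator {T..T+h} t = ennreal (c * indicator {T..T+h} t)"
        using c0 by (simp add: indicator_def)
      also have "\<dots> \<le> ennreal (indicator {0<..} t * \<psi> t)" by (rule ennreal_leI[OF low_pt])
      finally show "ennreal c * indicator {T..T+h} t \<le> ennreal (indicator {0<..} t * \<psi> t)" .
    qed
    also have "(\<integral>\<^sup>+ t. ennreal c * indicator {T..T+h} t \<partial>lborel) = ennreal c * emeasure lborel {T..T+h}"
      by (rule nn_integral_cmult_indicator) simp
    also have "emeasure lborel {T..T+h} = ennreal h" using h0 by simp
    also have "ennreal c * ennreal h = ennreal (c * h)" using c0 h0 by (simp add: ennreal_mult)
    finally have "ennreal (c * h) \<le> ennreal (LBINT t:{0<..}. \<psi> t)" .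
    moreover have "(LBINT t:{0<..}. \<psi> t) \<ge> 0"
      unfolding set_lebesgue_integral_def using psi_nn by (intro integral_nonneg_AE) (auto simp: indicator_def)
    ultimately show ?thesis by (subst (asm) ennreal_le_iff) auto
  qed
  have sQ: "sqrt Q \<ge> 1" using Q1 by simp
  have TsQ: "T \<le> sqrt Q"
  proof -
    have a1: "1 * (T*(T+1)) \<le> s * (T*(T+1))" using s1 T0 by (intro mult_right_mono) auto
    have a2: "T^2 \<le> T*(T+1)" using T0 by (simp add: power2_eq_square algebra_simps)
    have a3: "Q = s * (T*(T+1))" using TQ by (simp add: mult.assoc)
    have "T^2 \<le> Q" using a1 a2 a3 by linarith
    then show ?thesis using T0 by (simp add: real_le_rsqrt)
  qed
  have hsQ: "h \<le> sqrt Q"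
  proof -
    have "h^2 \<le> T" unfolding h2 using T0 s1 by (simp add: divide_le_eq)
    also have "T \<le> Q"
    proof -
      have "1 * sqrt Q \<le> sqrt Q * sqrt Q" using sQ by (intro mult_right_mono) auto
      moreover have "sqrt Q * sqrt Q = Q" using Qpos by simp
      ultimately show ?thesis using TsQ by linarith
    qed
    finally show ?thesis using h0 by (simp add: real_le_rsqrt)
  qed
  have Tlow: "T \<ge> sqrt Q / (2 * s)"
  proof -
    have nz: "s * (T + 1) \<noteq> 0" using spos T0 by simp
    have "Q = T * (s * (T + 1))" using TQ by (simp add: algebra_simps)
    then have "T = Q / (s * (T + 1))" using nz by simp
    moreover have "s * (T + 1) \<le> s * (2 * sqrt Q)"
    proof -
      have "T + 1 \<le> 2 * sqrt Q" using TsQ sQ by linarith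
      then show ?thesis using spos by (intro mult_left_mono) auto
    qed
    moreover have "0 < s * (2 * sqrt Q) * (s * (T + 1))" using spos T0 Qpos by simp
    ultimately have "T \<ge> Q / (s * (2 * sqrt Q))" using divide_left_mono[of "s * (T + 1)" "s * (2 * sqrt Q)" Q] Qpos
      by simp
    moreover have "Q / (s * (2 * sqrt Q)) = sqrt Q / (2 * s)"
    proof -
      have "Q = sqrt Q * sqrt Q" using Qpos by simp
      then show ?thesis using aux_q[of "sqrt Q" s] Qpos spos by simp
    qed
    ultimately show ?thesis by simp
  qed
  have hlow: "h \<ge> Q powr (1/4) / (sqrt 2 * s)"
  proof -
    have "sqrt Q / (2 * s) / s \<le> T / s" using Tlow spos by (intro divide_right_mono) auto
    then have "sqrt (sqrt Q / (2 * s) / s) \<le> h" unfolding h_def by (rule real_sqrt_le_mono)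
    moreover have "sqrt (sqrt Q / (2 * s) / s) = Q powr (1/4) / (sqrt 2 * s)"
    proof -
      have "sqrt Q / (2 * s) / s = sqrt Q / (2 * s^2)" by (simp add: power2_eq_square)
      then have "sqrt (sqrt Q / (2 * s) / s) = sqrt (sqrt Q) / (sqrt 2 * s)"
        using spos by (simp add: real_sqrt_divide real_sqrt_mult)
      moreover have "sqrt (sqrt Q) = Q powr (1/4)"
        using Qpos by (simp add: powr_half_sqrt[symmetric] powr_powr)
      ultimately show ?thesis by simp
    qed
    ultimately show ?thesis by simp
  qed
  have Pw: "(1 + T + h) powr (-1-p) \<ge> (1/9) * Q powr (-1/2 - p/2)"
  proof -
    have "1 + T + h \<le> 3 * sqrt Q" using sQ TsQ hsQ by linarith
    then have "(3 * sqrt Q) powr (-1-p) \<le> (1 + T + h) powr (-1-p)"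
      by (intro powr_mono2') (use p0 T0 h0 in auto)
    moreover have "(3 * sqrt Q) powr (-1-p) = 3 powr (-1-p) * Q powr (-1/2 - p/2)"
    proof -
      have ex: "(- 1 - p) / 2 = - (1/2) - p/2" by (simp add: field_simps)
      show ?thesis using Qpos by (simp add: powr_mult powr_half_sqrt[symmetric] powr_powr ex)
    qed
    moreover have "3 powr (-1-p) \<ge> 3 powr (-2)" using p1 by (intro powr_mono) auto
    moreover have "(3::real) powr (-2) = 1/9" by (simp add: powr_minus_divide)
    ultimately have "(1/9) \<le> 3 powr (-1-p)" "(3 * sqrt Q) powr (-1-p) \<le> (1 + T + h) powr (-1-p)"
      "(3 * sqrt Q) powr (-1-p) = 3 powr (-1-p) * Q powr (-1/2 - p/2)" by auto
    then have "(1/9) * Q powr (-1/2 - p/2) \<le> 3 powr (-1-p) * Q powr (-1/2 - p/2)"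
      by (intro mult_right_mono) auto
    with \<open>(3 * sqrt Q) powr (-1-p) \<le> (1 + T + h) powr (-1-p)\<close>
      \<open>(3 * sqrt Q) powr (-1-p) = 3 powr (-1-p) * Q powr (-1/2 - p/2)\<close>
    show ?thesis by linarith
  qed
  have ch: "(exp (-2) / (9 * sqrt 2)) * Q powr (-1/4 - p/2) * (s powr (-1) * exp FT) \<le> c * h"
  proof -
    have "c * h \<ge> exp (FT - 2) * ((1/9) * Q powr (-1/2 - p/2)) * (Q powr (1/4) / (sqrt 2 * s))"
      unfolding c_def using Pw hlow spos by (intro mult_mono) auto
    moreover have "exp (FT - 2) * ((1/9) * Q powr (-1/2 - p/2)) * (Q powr (1/4) / (sqrt 2 * s))
        = (exp (-2) / (9 * sqrt 2)) * (Q powr (-1/2 - p/2) * Q powr (1/4)) * (s powr (-1) * exp FT)"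
    proof -
      have "exp (FT - 2) = exp FT * exp (-2)" by (simp add: exp_add[symmetric])
      moreover have "s powr (-1) = 1/s" using spos by (simp add: powr_neg_one)
      ultimately show ?thesis using aux_ch[of "sqrt 2" s "exp FT" "exp (-2)" "Q powr (-1/2 - p/2)" "Q powr (1/4)"] spos
        by simp
    qed
    moreover have "Q powr (-1/2 - p/2) * Q powr (1/4) = Q powr (-1/4 - p/2)"
      by (simp add: powr_add[symmetric])
    ultimately show ?thesis by simp
  qed
  show "(exp (-2) / (9 * sqrt 2)) * Q powr (-1/4 - p/2) * (s powr (-1) * exp (-s + FT) / Gamma (Q+1))
       \<le> tricomiT \<beta> \<alpha> (-s)"
  proof -
    have G: "Gamma (Q+1) > 0" using Q1 by (intro Gamma_real_pos) simp
    have "(exp (-2) / (9 * sqrt 2)) * Q powr (-1/4 - p/2) * (s powr (-1) * exp (-s + FT) / Gamma (Q+1))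
        = exp (-s) / Gamma (Q+1) * ((exp (-2) / (9 * sqrt 2)) * Q powr (-1/4 - p/2) * (s powr (-1) * exp FT))"
      unfolding exp_add using G by (intro aux_fin) simp
    also have "\<dots> \<le> exp (-s) / Gamma (Q+1) * (LBINT t:{0<..}. \<psi> t)"
      using ch low G by (intro mult_left_mono) auto
    finally show ?thesis unfolding tri .
  qed
qed



lemma Gfun_Gf: "Gfun g Q y u = Gf (-y) (2*Q+g) u"
  unfolding Gfun_def Gf_def by simp

lemma main_inst:
  fixes n :: nat and \<alpha> \<gamma> Q \<beta> y C :: real
  assumes n2: "n \<ge> 2" and al: "\<alpha> = 1 - 1/real n" and ga: "\<gamma> = 1/2 + 1/real n"
    and Qd: "Q = \<alpha> - \<beta> - 1" and Cd: "C = 1000 * real n * exp 3"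
    and hQ: "Q \<ge> 1" and hy: "y \<le> -1"
  shows "(1 / C) * Q powr (- 1/4 - 1 / (2 * real n)) *
         ((- y) powr (-1) * exp (y + Ffun Q y (t0 Q y)) / Gamma (Q + 1))
        \<le> tricomiT \<beta> \<alpha> y
    \<and> tricomiT \<beta> \<alpha> y \<le> C * Q powr (1/4) * (exp (y + Ffun Q y (t0 Q y)) / Gamma (Q + 1))
    \<and> (1 / C) * Q powr (- 1/4) *
         ((- y) powr ((1 - 2 * \<alpha>) / 4) * exp (y + Gfun \<gamma> Q y (u0 \<gamma> Q y)) / Gamma (Q + 1))
        \<le> kummerM \<beta> \<alpha> y
    \<and> kummerM \<beta> \<alpha> y \<le>
         C * ((- y) powr ((1 - 2 * \<alpha>) / 4) * exp (y + Gfun \<gamma> Q y (u0 \<gamma> Q y)) / Gamma (Q + 1))"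
proof -
  define s where "s = - y"
  have s1: "s \<ge> 1" using hy by (simp add: s_def)
  have ys: "y = - s" by (simp add: s_def)
  have nr: "real n \<ge> 2" using n2 by simp
  define p where "p = 1 / real n"
  have p0: "0 < p" and p1: "p \<le> 1/2" using nr by (auto simp: p_def field_simps)
  define r where "r = 1/2 - 1 / real n"
  have r0: "0 \<le> r" and r1: "r \<le> 1/2" using nr by (auto simp: r_def field_simps)
  have al': "\<alpha> = 1 - p" using al by (simp add: p_def)
  have G: "Gamma (Q+1) > 0" using hQ by (intro Gamma_real_pos) simp
  have e3: "exp (3::real) \<ge> 1" by simp
  have Cpos: "C > 0" unfolding Cd using nr by simp
  define FT where "FT = Ffun Q y (t0 Q y)"
  note TB = T_bounds[OF p0 p1 hQ s1 al' Qd, unfolded ys[symmetric] FT_def[symmetric]]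
  have Tup: "tricomiT \<beta> \<alpha> y \<le> C * Q powr (1/4) * (exp (y + FT) / Gamma (Q + 1))"
  proof -
    have X: "exp (y + FT) / Gamma (Q + 1) \<ge> 0" using G by simp
    have q: "Q powr (1/4) \<ge> 1" using hQ by (simp add: ge_one_powr_ge_zero)
    have "1/p = real n" by (simp add: p_def)
    also have "real n \<le> C"
    proof -
      have "1000 * real n * 1 \<le> 1000 * real n * exp 3" using e3 nr by (intro mult_left_mono) auto
      then show ?thesis unfolding Cd using nr by linarith
    qed
    also have "C \<le> C * Q powr (1/4)" using Cpos q by simp
    finally have "1/p \<le> C * Q powr (1/4)" .
    then have "(1/p) * (exp (y + FT) / Gamma (Q+1)) \<le> C * Q powr (1/4) * (exp (y + FT) / Gamma (Q + 1))"
      using X by (intro mult_right_mono) auto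
    moreover have "tricomiT \<beta> \<alpha> y \<le> (1/p) * (exp (y + FT) / Gamma (Q+1))"
      using TB(1) by (simp add: ys)
    ultimately show ?thesis by linarith
  qed
  have Tlow: "(1 / C) * Q powr (- 1/4 - 1 / (2 * real n)) * ((- y) powr (-1) * exp (y + FT) / Gamma (Q + 1))
        \<le> tricomiT \<beta> \<alpha> y"
  proof -
    have ex: "- 1/4 - 1 / (2 * real n) = -1/4 - p/2" by (simp add: p_def)
    have Y: "Q powr (-1/4 - p/2) * ((- y) powr (-1) * exp (y + FT) / Gamma (Q + 1)) \<ge> 0" using G by simp
    have c: "1 / C \<le> exp (-2) / (9 * sqrt 2)"
    proof -
      have s2: "sqrt 2 \<le> (2::real)" using real_sqrt_le_mono[of 2 4] real_sqrt_four by simp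
      have "exp 2 * (9 * sqrt 2) \<le> exp 2 * 18" using s2 by simp
      also have "\<dots> \<le> exp 2 * exp 1 * (1000 * real n)"
      proof -
        have "1 * (1000 * real n) \<le> exp 1 * (1000 * real n)" using nr by (intro mult_right_mono) auto
        then have "18 \<le> exp 1 * (1000 * real n)" using nr by linarith
        then have "exp 2 * 18 \<le> exp 2 * (exp 1 * (1000 * real n))" by (intro mult_left_mono) auto
        then show ?thesis by (simp add: mult.assoc)
      qed
      also have "exp 2 * exp 1 = exp (3::real)" by (simp add: exp_add[symmetric])
      finally have le: "exp 2 * (9 * sqrt 2) \<le> C" unfolding Cd by (simp add: mult_ac)
      have "1 / C \<le> 1 / (exp 2 * (9 * sqrt 2))"
        by (rule divide_left_mono[OF le]) (use Cpos in auto)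
      also have "\<dots> = exp (-2) / (9 * sqrt 2)" by (simp add: exp_minus field_simps)
      finally show ?thesis .
    qed
    have "(1 / C) * Q powr (- 1/4 - 1 / (2 * real n)) * ((- y) powr (-1) * exp (y + FT) / Gamma (Q + 1))
        = (1 / C) * (Q powr (-1/4 - p/2) * ((- y) powr (-1) * exp (y + FT) / Gamma (Q + 1)))"
      unfolding ex by simp
    also have "\<dots> \<le> (exp (-2) / (9 * sqrt 2)) * (Q powr (-1/4 - p/2) * ((- y) powr (-1) * exp (y + FT) / Gamma (Q + 1)))"
      using c Y by (intro mult_right_mono) auto
    also have "\<dots> \<le> tricomiT \<beta> \<alpha> y"
      using TB(2) by (simp add: ys mult.assoc)
    finally show ?thesis .
  qed
  have a12: "1/2 + r = \<alpha>" using al by (simp add: r_def)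
  have b12: "1/2 + r - (Q+1) = \<beta>" using al Qd by (simp add: r_def)
  have g12: "\<gamma> = 1 - r" using ga by (simp add: r_def)
  have b12': "\<alpha> - (Q+1) = \<beta>" using Qd by simp
  note MB = M_bounds[OF r0 r1 hQ s1, unfolded a12 b12']
  define Z where "Z = (- y) powr ((1 - 2 * \<alpha>) / 4) * exp (y + Gfun \<gamma> Q y (u0 \<gamma> Q y)) / Gamma (Q + 1)"
  have Zeq: "exp (-s) * (s powr (-r/2) * exp (Gf s (2*Q + (1-r)) (u0 (1-r) Q (-s)))) / Gamma (Q+1) = Z"
  proof -
    have ex: "(1 - 2 * \<alpha>) / 4 = -r/2" using al by (simp add: r_def field_simps)
    have "Gfun \<gamma> Q y (u0 \<gamma> Q y) = Gf s (2*Q + (1-r)) (u0 (1-r) Q (-s))"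
      unfolding Gfun_Gf g12 s_def by simp
    then show ?thesis unfolding Z_def ex by (simp add: exp_add s_def mult_ac)
  qed
  have Z0: "Z \<ge> 0" unfolding Z_def using G by simp
  have Mup: "kummerM \<beta> \<alpha> y \<le> C * Z"
  proof -
    have "kummerM \<beta> \<alpha> y \<le> 2 * pi * Z" unfolding ys Zeq[symmetric] using MB(1) by simp
    also have "2 * pi \<le> C"
    proof -
      have "2 * pi \<le> (8::real)" using pi_less_4 by simp
      also have "\<dots> \<le> 1000 * real n" using nr by simp
      also have "\<dots> \<le> 1000 * real n * exp 3" using e3 nr by simp
      finally show ?thesis unfolding Cd .
    qed
    then have "2 * pi * Z \<le> C * Z" using Z0 by (intro mult_right_mono) auto
    finally show ?thesis .
  qed
  have Mlow: "(1 / C) * Q powr (- 1/4) * Z \<le> kummerM \<beta> \<alpha> y"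
  proof -
    have e: "(- 1/4::real) = - (1/4)" by simp
    have q1: "Q powr (1/4) \<ge> 1" using hQ by (simp add: ge_one_powr_ge_zero)
    have q: "Q powr (- 1/4) \<le> 1"
    proof -
      have "Q powr (- 1/4) = 1 / Q powr (1/4)" unfolding e by (rule powr_minus_divide)
      also have "\<dots> \<le> 1 / 1" by (rule divide_left_mono[OF q1]) (use q1 in auto)
      also have "\<dots> = 1" by simp
      finally show ?thesis .
    qed
    have c: "1 / C \<le> exp (-3) / 12"
    proof -
      have le: "12 * exp 3 \<le> C" unfolding Cd using nr by simp
      have "1 / C \<le> 1 / (12 * exp 3)"
        by (rule divide_left_mono[OF le]) (use Cpos in auto)
      also have "\<dots> = exp (-3) / 12" by (simp add: exp_minus field_simps)
      finally show ?thesis .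
    qed
    have "(1 / C) * Q powr (- 1/4) * Z \<le> (1 / C) * 1 * Z"
      using q Z0 Cpos by (intro mult_right_mono mult_left_mono) auto
    also have "\<dots> = (1 / C) * Z" by simp
    also have "\<dots> \<le> (exp (-3) / 12) * Z" by (rule mult_right_mono[OF c Z0])
    also have "\<dots> \<le> kummerM \<beta> \<alpha> y" unfolding ys Zeq[symmetric] using MB(2) by simp
    finally show ?thesis .
  qed
  show ?thesis using Tup Tlow Mup Mlow unfolding FT_def Z_def by auto
qed

theorem proposition4p4:
  fixes n :: nat
  assumes "n \<ge> 2"
  shows "\<exists>C>0. \<forall>\<beta> y::real.
    let \<alpha> = 1 - 1 / real n; \<gamma> = 1/2 + 1 / real n; Q = \<alpha> - \<beta> - 1 in
    \<beta> \<le> 0 \<longrightarrow> Q \<ge> 1 \<longrightarrow> y \<le> -1 \<longrightarrow>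
      (1 / C) * Q powr (- 1/4 - 1 / (2 * real n)) *
         ((- y) powr (-1) * exp (y + Ffun Q y (t0 Q y)) / Gamma (Q + 1))
        \<le> tricomiT \<beta> \<alpha> y
    \<and> tricomiT \<beta> \<alpha> y \<le> C * Q powr (1/4) * (exp (y + Ffun Q y (t0 Q y)) / Gamma (Q + 1))
    \<and> (1 / C) * Q powr (- 1/4) *
         ((- y) powr ((1 - 2 * \<alpha>) / 4) * exp (y + Gfun \<gamma> Q y (u0 \<gamma> Q y)) / Gamma (Q + 1))
        \<le> kummerM \<beta> \<alpha> y
    \<and> kummerM \<beta> \<alpha> y \<le>
         C * ((- y) powr ((1 - 2 * \<alpha>) / 4) * exp (y + Gfun \<gamma> Q y (u0 \<gamma> Q y)) / Gamma (Q + 1))"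
proof -
  define C where "C = 1000 * real n * exp (3::real)"
  have Cpos: "C > 0" unfolding C_def using assms by simp
  show ?thesis
  proof (intro exI[of _ C] conjI allI)
    show "C > 0" by (rule Cpos)
  next
    fix \<beta> y :: real
    show "let \<alpha> = 1 - 1 / real n; \<gamma> = 1/2 + 1 / real n; Q = \<alpha> - \<beta> - 1 in
    \<beta> \<le> 0 \<longrightarrow> Q \<ge> 1 \<longrightarrow> y \<le> -1 \<longrightarrow>
      (1 / C) * Q powr (- 1/4 - 1 / (2 * real n)) *
         ((- y) powr (-1) * exp (y + Ffun Q y (t0 Q y)) / Gamma (Q + 1))
        \<le> tricomiT \<beta> \<alpha> y
    \<and> tricomiT \<beta> \<alpha> y \<le> C * Q powr (1/4) * (exp (y + Ffun Q y (t0 Q y)) / Gamma (Q + 1))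
    \<and> (1 / C) * Q powr (- 1/4) *
         ((- y) powr ((1 - 2 * \<alpha>) / 4) * exp (y + Gfun \<gamma> Q y (u0 \<gamma> Q y)) / Gamma (Q + 1))
        \<le> kummerM \<beta> \<alpha> y
    \<and> kummerM \<beta> \<alpha> y \<le>
         C * ((- y) powr ((1 - 2 * \<alpha>) / 4) * exp (y + Gfun \<gamma> Q y (u0 \<gamma> Q y)) / Gamma (Q + 1))"
      unfolding Let_def
      by (intro impI main_inst[OF assms refl refl refl C_def])
  qed
qed

end
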